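(* Let $d\ge 2$ be an even integer. For the problem on the network $\mathscr{G}_d$ in which each $w_i$ ($i\in\{0,1,2\}$) receives an input bit $b_i$ and each $v_j$ ($j\in\{0,\dots,3d-1\}$) must output a bit $x_j$ such that $(x_0,\dots,x_{3d-1})\in\Lambda_d(b_0,b_1,b_2)$: there exists a $2$-round quantum LOCAL algorithm that always outputs a valid string; and for any integer $T\le d/2$, no $T$-round classical LOCAL algorithm can output a valid string with probability greater than $7/8$ on all inputs $(b_0,b_1,b_2)\in\{0,1\}^3$, even if arbitrary prior randomness shared among the nodes is allowed.
   Context: For even $d\ge2$, $G_d$ is the cycle on nodes $v_0,v_1,\dots,v_{3d-1}$ with edges $\{v_j,v_{j+1}\}$ (indices mod $3d$). The network $\mathscr{G}_d$ has node set $\{v_0,\dots,v_{3d-1}\}\cup\{w_0,w_1,w_2\}$ and the edges of $G_d$ together with $\{v_0,w_0\},\{v_d,w_1\},\{v_{2d},w_2\}$. Graph state of a graph: one qubit register per node initialized to $|0\rangle$, Hadamard $\mathrm{H}=\frac1{\sqrt2}\begin{pmatrix}1&1\\1&-1\end{pmatrix}$ applied to each, then $\mathrm{CZ}=\mathrm{diag}(1,1,1,-1)$ applied to each pair of registers forming an edge. For bits $b_0,b_1,b_2$ the process $\mathscr{P}_d(b_0,b_1,b_2)$ is: (1) create the graph state of $G_d$; (2) for each $i\in\{0,1,2\}$ apply $\mathrm{S}^{b_i}$ to the qubit of $v_{di}$, where $\mathrm{S}=\mathrm{diag}(1,i)$; (3) apply $\mathrm{H}$ to every qubit; (4) measure all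 qubits in the computational basis, obtaining $m\in\{0,1\}^{3d}$ whose $j$-th bit is the outcome at $v_j$. $\Lambda_d(b_0,b_1,b_2)\subseteq\{0,1\}^{3d}$ is the set of outcomes occurring with nonzero probability. LOCAL model: synchronous rounds, each node (with distinct identifier, knowing its incident edges and the number of nodes) may do arbitrary local computation and send one unbounded-size message per neighbour per round; classical: probabilistic processors and classical messages; quantum: quantum processors and quantum messages; no initial shared entanglement (and, unless stated, no shared randomness). *)

theory Defs
  imports "HOL-Probability.Probability"
begin

text \<open>A computational basis state is a
bit assignment (nat => bool); a (pure) state vector assigns a complex amplitude to
every basis state. Only basis states that are False outside the qubits in use
ever carry nonzero amplitude.\<close>

type_synonym bits = "nat \<Rightarrow> bool"
type_synonym qstate = "bits \<Rightarrow> complex"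
type_synonym qop = "bits \<Rightarrow> bits \<Rightarrow> complex"

definition conf :: "nat set \<Rightarrow> bits set" where
  "conf S = {x. \<forall>q. q \<notin> S \<longrightarrow> \<not> x q}"

definition restr :: "bits \<Rightarrow> nat set \<Rightarrow> bits" where
  "restr x S = (\<lambda>q. q \<in> S \<and> x q)"

text \<open>Apply the operator with matrix u (indexed by basis states of the qubits in S)
to the qubits in S, acting as the identity on all other qubits.\<close>
definition apply_on :: "nat set \<Rightarrow> qop \<Rightarrow> qstate \<Rightarrow> qstate" where
  "apply_on S u \<psi> =
     (\<lambda>x. \<Sum>y\<in>{y. \<forall>q. q \<notin> S \<longrightarrow> y q = x q}. u (restr x S) (restr y S) * \<psi> y)"

definition unitary_on :: "nat set \<Rightarrow> qop \<Rightarrow> bool" where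
  "unitary_on S u \<longleftrightarrow> finite S \<and>
     (\<forall>a\<in>conf S. \<forall>b\<in>conf S.
        (\<Sum>c\<in>conf S. cnj (u c a) * u c b) = (if a = b then 1 else 0))"

definition ket0 :: qstate where
  "ket0 = (\<lambda>x. if (\<forall>q. \<not> x q) then 1 else 0)"

definition hgate :: "nat \<Rightarrow> qop" where
  "hgate k = (\<lambda>a b. (if a k \<and> b k then -1 else 1) / complex_of_real (sqrt 2))"

definition sgate :: "nat \<Rightarrow> qop" where
  "sgate k = (\<lambda>a b. if a = b then (if a k then \<i> else 1) else 0)"

definition czgate :: "nat \<Rightarrow> nat \<Rightarrow> qop" where
  "czgate j k = (\<lambda>a b. if a = b then (if a j \<and> a k then -1 else 1) else 0)"

definition apply_H :: "nat \<Rightarrow> qstate \<Rightarrow> qstate" where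
  "apply_H k = apply_on {k} (hgate k)"

definition apply_S :: "nat \<Rightarrow> qstate \<Rightarrow> qstate" where
  "apply_S k = apply_on {k} (sgate k)"

definition apply_CZ :: "nat \<Rightarrow> nat \<Rightarrow> qstate \<Rightarrow> qstate" where
  "apply_CZ j k = apply_on {j, k} (czgate j k)"

text \<open>Node v_j of G_d is qubit j, for j < 3d.\<close>
definition cycle_edges :: "nat \<Rightarrow> (nat \<times> nat) list" where
  "cycle_edges d = map (\<lambda>j. (j, Suc j mod (3 * d))) [0..<3 * d]"

definition graph_state :: "nat \<Rightarrow> qstate" where
  "graph_state d =
     fold (\<lambda>(j, k). apply_CZ j k) (cycle_edges d)
       (fold apply_H [0..<3 * d] ket0)"

definition process_state :: "nat \<Rightarrow> bool \<Rightarrow> bool \<Rightarrow> bool \<Rightarrow> qstate" where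
  "process_state d b0 b1 b2 =
     (let bs = [b0, b1, b2];
          \<psi>2 = fold (\<lambda>i. if bs ! i then apply_S (d * i) else id) [0..<3] (graph_state d)
      in fold apply_H [0..<3 * d] \<psi>2)"

text \<open>Outcomes m in {0,1}^(3d), represented as bit assignments false beyond 3d;
m j is the outcome at v_j. Nonzero probability iff nonzero amplitude.\<close>
definition Lambda :: "nat \<Rightarrow> bool \<Rightarrow> bool \<Rightarrow> bool \<Rightarrow> bits set" where
  "Lambda d b0 b1 b2 = {m \<in> conf {..<3 * d}. process_state d b0 b1 b2 m \<noteq> 0}"

text \<open>Nodes: v_j is j (j < 3d), w_i is 3d + i (i < 3).\<close>
definition net_nodes :: "nat \<Rightarrow> nat set" where
  "net_nodes d = {..<3 * d + 3}"

definition net_adj :: "nat \<Rightarrow> nat \<Rightarrow> nat \<Rightarrow> bool" where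
  "net_adj d u v \<longleftrightarrow>
     (u < 3 * d \<and> v < 3 * d \<and> (v = Suc u mod (3 * d) \<or> u = Suc v mod (3 * d))) \<or>
     (\<exists>i<3. (u = d * i \<and> v = 3 * d + i) \<or> (v = d * i \<and> u = 3 * d + i))"

definition net_input :: "nat \<Rightarrow> bool \<Rightarrow> bool \<Rightarrow> bool \<Rightarrow> nat \<Rightarrow> bool" where
  "net_input d b0 b1 b2 v =
     (if v = 3 * d then b0 else if v = 3 * d + 1 then b1 else if v = 3 * d + 2 then b2 else False)"

text \<open>A quantum LOCAL algorithm uses N qubits (0..N-1), all initialised to |0>;
qubit q initially resides at node home q (no shared entanglement). In each step
t = 0..T, every node v applies a unitary U t v b (b = its input bit) to the qubits
it currently holds; after step t < T (i.e. in communication round t+1) every qubit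
is either kept or sent to a neighbour, its new location being mv t q. After the
final local step T every node measures its qubits in the computational basis and
node v_j outputs out j applied to the outcomes of the qubits it holds.\<close>

definition qloc :: "(nat \<Rightarrow> nat) \<Rightarrow> (nat \<Rightarrow> nat \<Rightarrow> nat) \<Rightarrow> nat \<Rightarrow> nat \<Rightarrow> nat" where
  "qloc home mv t q = (if t = 0 then home q else mv (t - 1) q)"

definition held :: "nat \<Rightarrow> (nat \<Rightarrow> nat) \<Rightarrow> (nat \<Rightarrow> nat \<Rightarrow> nat) \<Rightarrow> nat \<Rightarrow> nat \<Rightarrow> nat set" where
  "held N home mv t v = {q. q < N \<and> qloc home mv t q = v}"

definition qlocal_valid ::
  "nat \<Rightarrow> nat \<Rightarrow> nat \<Rightarrow> (nat \<Rightarrow> nat) \<Rightarrow> (nat \<Rightarrow> nat \<Rightarrow> nat) \<Rightarrow>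
   (nat \<Rightarrow> nat \<Rightarrow> bool \<Rightarrow> qop) \<Rightarrow> bool" where
  "qlocal_valid d T N home mv U \<longleftrightarrow>
     (\<forall>q<N. home q \<in> net_nodes d) \<and>
     (\<forall>t<T. \<forall>q<N. mv t q = qloc home mv t q \<or> net_adj d (qloc home mv t q) (mv t q)) \<and>
     (\<forall>t\<le>T. \<forall>v\<in>net_nodes d. \<forall>b. unitary_on (held N home mv t v) (U t v b))"

definition qstep ::
  "nat \<Rightarrow> nat \<Rightarrow> (nat \<Rightarrow> nat) \<Rightarrow> (nat \<Rightarrow> nat \<Rightarrow> nat) \<Rightarrow> (nat \<Rightarrow> nat \<Rightarrow> bool \<Rightarrow> qop) \<Rightarrow>
   (nat \<Rightarrow> bool) \<Rightarrow> nat \<Rightarrow> qstate \<Rightarrow> qstate" where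
  "qstep d N home mv U inp t \<psi> =
     fold (\<lambda>v. apply_on (held N home mv t v) (U t v (inp v))) [0..<3 * d + 3] \<psi>"

fun qrun ::
  "nat \<Rightarrow> nat \<Rightarrow> (nat \<Rightarrow> nat) \<Rightarrow> (nat \<Rightarrow> nat \<Rightarrow> nat) \<Rightarrow> (nat \<Rightarrow> nat \<Rightarrow> bool \<Rightarrow> qop) \<Rightarrow>
   (nat \<Rightarrow> bool) \<Rightarrow> nat \<Rightarrow> qstate" where
  "qrun d N home mv U inp 0 = qstep d N home mv U inp 0 ket0"
| "qrun d N home mv U inp (Suc t) = qstep d N home mv U inp (Suc t) (qrun d N home mv U inp t)"

definition qoutput ::
  "nat \<Rightarrow> nat \<Rightarrow> (nat \<Rightarrow> nat) \<Rightarrow> (nat \<Rightarrow> nat \<Rightarrow> nat) \<Rightarrow> nat \<Rightarrow> (nat \<Rightarrow> bits \<Rightarrow> bool) \<Rightarrow>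
   bits \<Rightarrow> bits" where
  "qoutput d N home mv T out x = (\<lambda>j. j < 3 * d \<and> out j (restr x (held N home mv T j)))"

definition quantum_always_valid :: "nat \<Rightarrow> nat \<Rightarrow> bool" where
  "quantum_always_valid d T \<longleftrightarrow>
     (\<exists>N home mv U out. qlocal_valid d T N home mv U \<and>
        (\<forall>b0 b1 b2. \<forall>x. qrun d N home mv U (net_input d b0 b1 b2) T x \<noteq> 0 \<longrightarrow>
            qoutput d N home mv T out x \<in> Lambda d b0 b1 b2))"

text \<open>All randomness (shared, and private coins, which can be regarded as parts of
the shared random string) is a sample r of a probability space R. Node v starts in
state init v (input of v) r; in round t+1 each node v sends msg t v u s to each
neighbour u (s its current state) and updates its state with upd, given the
messages received from its neighbours (None from non-neighbours).\<close>

fun crun ::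
  "nat \<Rightarrow> (nat \<Rightarrow> bool \<Rightarrow> 'r \<Rightarrow> 's) \<Rightarrow> (nat \<Rightarrow> nat \<Rightarrow> nat \<Rightarrow> 's \<Rightarrow> 'm) \<Rightarrow>
   (nat \<Rightarrow> nat \<Rightarrow> 's \<Rightarrow> (nat \<Rightarrow> 'm option) \<Rightarrow> 's) \<Rightarrow> (nat \<Rightarrow> bool) \<Rightarrow> 'r \<Rightarrow> nat \<Rightarrow> nat \<Rightarrow> 's" where
  "crun d init msg upd inp r 0 v = init v (inp v) r"
| "crun d init msg upd inp r (Suc t) v =
     upd t v (crun d init msg upd inp r t v)
       (\<lambda>u. if net_adj d u v then Some (msg t u v (crun d init msg upd inp r t u)) else None)"

definition coutput ::
  "nat \<Rightarrow> nat \<Rightarrow> (nat \<Rightarrow> bool \<Rightarrow> 'r \<Rightarrow> 's) \<Rightarrow> (nat \<Rightarrow> nat \<Rightarrow> nat \<Rightarrow> 's \<Rightarrow> 'm) \<Rightarrow>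
   (nat \<Rightarrow> nat \<Rightarrow> 's \<Rightarrow> (nat \<Rightarrow> 'm option) \<Rightarrow> 's) \<Rightarrow> (nat \<Rightarrow> 's \<Rightarrow> bool) \<Rightarrow>
   (nat \<Rightarrow> bool) \<Rightarrow> 'r \<Rightarrow> bits" where
  "coutput d T init msg upd out inp r = (\<lambda>j. j < 3 * d \<and> out j (crun d init msg upd inp r T j))"

definition csuccess_event ::
  "nat \<Rightarrow> nat \<Rightarrow> 'r measure \<Rightarrow> (nat \<Rightarrow> bool \<Rightarrow> 'r \<Rightarrow> 's) \<Rightarrow> (nat \<Rightarrow> nat \<Rightarrow> nat \<Rightarrow> 's \<Rightarrow> 'm) \<Rightarrow>
   (nat \<Rightarrow> nat \<Rightarrow> 's \<Rightarrow> (nat \<Rightarrow> 'm option) \<Rightarrow> 's) \<Rightarrow> (nat \<Rightarrow> 's \<Rightarrow> bool) \<Rightarrow>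
   bool \<Rightarrow> bool \<Rightarrow> bool \<Rightarrow> 'r set" where
  "csuccess_event d T R init msg upd out b0 b1 b2 =
     {r \<in> space R. coutput d T init msg upd out (net_input d b0 b1 b2) r \<in> Lambda d b0 b1 b2}"

end

theory Submission
  imports Defs
begin

definition ov :: "bits \<Rightarrow> bits \<Rightarrow> nat set \<Rightarrow> bits" where
  "ov x z S = (\<lambda>q. if q \<in> S then z q else x q)"

definition nbh :: "nat set \<Rightarrow> bits \<Rightarrow> bits set" where
  "nbh S x = {y. \<forall>q. q \<notin> S \<longrightarrow> y q = x q}"

lemma finite_conf: "finite S \<Longrightarrow> finite (conf S)"
proof -
  assume f: "finite S"
  have "conf S \<subseteq> (\<lambda>A q. q \<in> A) ` Pow S"
  proof
    fix x assume "x \<in> conf S"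
    then have "x = (\<lambda>q. q \<in> {q\<in>S. x q})" by (auto simp: conf_def)
    moreover have "{q\<in>S. x q} \<in> Pow S" by auto
    ultimately show "x \<in> (\<lambda>A q. q \<in> A) ` Pow S" by blast
  qed
  then show ?thesis using f by (meson finite_Pow_iff finite_imageI finite_subset)
qed

lemma restr_conf[simp]: "restr x S \<in> conf S"
  by (auto simp: restr_def conf_def)

lemma restr_ov: "z \<in> conf S \<Longrightarrow> restr (ov x z S) S = z"
  by (auto simp: restr_def ov_def conf_def fun_eq_iff)

lemma ov_nbh: "ov x z S \<in> nbh S x"
  by (auto simp: ov_def nbh_def)

lemma nbh_ov: "y \<in> nbh S x \<Longrightarrow> ov x (restr y S) S = y"
  by (auto simp: restr_def ov_def nbh_def fun_eq_iff)

lemma bij_restr: "bij_betw (\<lambda>y. restr y S) (nbh S x) (conf S)"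
  apply (rule bij_betw_byWitness[where f' = "\<lambda>z. ov x z S"])
  using restr_ov ov_nbh nbh_ov by auto

lemma finite_nbh: "finite S \<Longrightarrow> finite (nbh S x)"
  using bij_restr[of S x] finite_conf bij_betw_finite by blast

lemma sum_nbh: "(\<Sum>y\<in>nbh S x. g (restr y S)) = (\<Sum>c\<in>conf S. g c)"
  using sum.reindex_bij_betw[OF bij_restr, of g] by simp

lemma nbh_trans: "y \<in> nbh S x \<Longrightarrow> nbh S y = nbh S x"
  by (auto simp: nbh_def)

lemma apply_on_nbh: "apply_on S u \<psi> x = (\<Sum>y\<in>nbh S x. u (restr x S) (restr y S) * \<psi> y)"
  by (simp add: apply_on_def nbh_def)

definition mm :: "nat set \<Rightarrow> qop \<Rightarrow> qop \<Rightarrow> qop" where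
  "mm S M1 M2 = (\<lambda>a b. \<Sum>c\<in>conf S. M1 a c * M2 c b)"

lemma apply_on_mm:
  assumes "finite S"
  shows "apply_on S (mm S M1 M2) \<psi> = apply_on S M1 (apply_on S M2 \<psi>)"
proof
  fix x
  have "apply_on S M1 (apply_on S M2 \<psi>) x =
     (\<Sum>y\<in>nbh S x. M1 (restr x S) (restr y S) * (\<Sum>z\<in>nbh S x. M2 (restr y S) (restr z S) * \<psi> z))"
    unfolding apply_on_nbh by (intro sum.cong refl) (simp add: nbh_trans)
  also have "\<dots> = (\<Sum>y\<in>nbh S x. \<Sum>z\<in>nbh S x. M1 (restr x S) (restr y S) * M2 (restr y S) (restr z S) * \<psi> z)"
    by (simp add: sum_distrib_left mult.assoc)
  also have "\<dots> = (\<Sum>z\<in>nbh S x. \<Sum>y\<in>nbh S x. M1 (restr x S) (restr y S) * M2 (restr y S) (restr z S) * \<psi> z)"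
    by (rule sum.swap)
  also have "\<dots> = (\<Sum>z\<in>nbh S x. (\<Sum>y\<in>nbh S x. M1 (restr x S) (restr y S) * M2 (restr y S) (restr z S)) * \<psi> z)"
    by (simp add: sum_distrib_right)
  also have "\<dots> = (\<Sum>z\<in>nbh S x. mm S M1 M2 (restr x S) (restr z S) * \<psi> z)"
    unfolding mm_def by (subst sum_nbh) simp
  also have "\<dots> = apply_on S (mm S M1 M2) \<psi> x" by (simp add: apply_on_nbh)
  finally show "apply_on S (mm S M1 M2) \<psi> x = apply_on S M1 (apply_on S M2 \<psi>) x" ..
qed

definition dg :: "(bits \<Rightarrow> complex) \<Rightarrow> qop" where
  "dg p = (\<lambda>a b. if a = b then p a else 0)"

lemma nbh_eq: "y \<in> nbh S x \<Longrightarrow> restr y S = restr x S \<Longrightarrow> y = x"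
  by (auto simp: nbh_def restr_def fun_eq_iff)

lemma self_nbh[simp]: "x \<in> nbh S x" by (simp add: nbh_def)

lemma apply_on_dg:
  assumes "finite S"
  shows "apply_on S (dg p) \<psi> x = p (restr x S) * \<psi> x"
proof -
  have "apply_on S (dg p) \<psi> x = (\<Sum>y\<in>nbh S x. if y = x then p (restr x S) * \<psi> x else 0)"
    unfolding apply_on_nbh dg_def
    by (intro sum.cong refl) (auto dest: nbh_eq)
  also have "\<dots> = p (restr x S) * \<psi> x"
    using finite_nbh[OF assms] by (simp add: sum.delta')
  finally show ?thesis .
qed

definition sg :: "bool \<Rightarrow> complex" where
  "sg b = (if b then -1 else 1)"

definition hc :: complex where "hc = 1 / complex_of_real (sqrt 2)"

lemma nbh_single: "nbh {k} x = {x(k:=False), x(k:=True)}"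
proof
  show "nbh {k} x \<subseteq> {x(k:=False), x(k:=True)}"
  proof
    fix y assume "y \<in> nbh {k} x"
    then have "y = x(k := y k)" by (auto simp: nbh_def fun_eq_iff)
    then show "y \<in> {x(k:=False), x(k:=True)}" by (cases "y k") auto
  qed
qed (auto simp: nbh_def)

lemma apply_H_eq: "apply_H k \<psi> x = hc * (\<psi> (x(k:=False)) + sg (x k) * \<psi> (x(k:=True)))"
proof -
  have ne: "x(k:=False) \<noteq> x(k:=True)" by (metis fun_upd_same)
  have "apply_H k \<psi> x = (\<Sum>y\<in>{x(k:=False), x(k:=True)}. hgate k (restr x {k}) (restr y {k}) * \<psi> y)"
    unfolding apply_H_def apply_on_nbh nbh_single ..
  also have "\<dots> = hgate k (restr x {k}) (restr (x(k:=False)) {k}) * \<psi> (x(k:=False)) +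
                  hgate k (restr x {k}) (restr (x(k:=True)) {k}) * \<psi> (x(k:=True))"
    using ne by simp
  also have "\<dots> = hc * (\<psi> (x(k:=False)) + sg (x k) * \<psi> (x(k:=True)))"
    by (simp add: hgate_def restr_def hc_def sg_def field_simps)
  finally show ?thesis .
qed



definition HT :: "nat set \<Rightarrow> qstate \<Rightarrow> qstate" where
  "HT Q \<psi> x = hc ^ card Q * (\<Sum>z\<in>conf Q. (\<Prod>q\<in>Q. sg (x q \<and> z q)) * \<psi> (ov x z Q))"

lemma conf_empty: "conf {} = {(\<lambda>_. False)}"
  by (auto simp: conf_def)

lemma HT_empty: "HT {} \<psi> = \<psi>"
  by (auto simp: HT_def conf_empty ov_def fun_eq_iff)

lemma conf_insert:
  assumes "k \<notin> Q"
  shows "conf (insert k Q) = conf Q \<union> (\<lambda>z. z(k:=True)) ` conf Q"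
proof
  show "conf (insert k Q) \<subseteq> conf Q \<union> (\<lambda>z. z(k:=True)) ` conf Q"
  proof
    fix z assume z: "z \<in> conf (insert k Q)"
    show "z \<in> conf Q \<union> (\<lambda>z. z(k:=True)) ` conf Q"
    proof (cases "z k")
      case True
      then have "z = (z(k:=False))(k:=True)" by (auto simp: fun_eq_iff)
      moreover have "z(k:=False) \<in> conf Q" using z by (auto simp: conf_def)
      ultimately show ?thesis by blast
    next
      case False
      then show ?thesis using z by (auto simp: conf_def)
    qed
  qed
  show "conf Q \<union> (\<lambda>z. z(k:=True)) ` conf Q \<subseteq> conf (insert k Q)"
    by (auto simp: conf_def)
qed

lemma sum_conf_insert:
  assumes "k \<notin> Q" "finite Q"
  shows "(\<Sum>z\<in>conf (insert k Q). f z) = (\<Sum>z\<in>conf Q. f z + f (z(k:=True)))"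
proof -
  have d: "conf Q \<inter> (\<lambda>z. z(k:=True)) ` conf Q = {}"
    using assms(1) by (auto simp: conf_def)
  have i: "inj_on (\<lambda>z. z(k:=True)) (conf Q)"
    using assms(1) by (auto simp: inj_on_def conf_def fun_eq_iff)
  have "(\<Sum>z\<in>conf (insert k Q). f z) = (\<Sum>z\<in>conf Q. f z) + (\<Sum>z\<in>(\<lambda>z. z(k:=True)) ` conf Q. f z)"
    unfolding conf_insert[OF assms(1)]
    by (rule sum.union_disjoint) (use d assms(2) finite_conf in auto)
  also have "(\<Sum>z\<in>(\<lambda>z. z(k:=True)) ` conf Q. f z) = (\<Sum>z\<in>conf Q. f (z(k:=True)))"
    by (rule sum.reindex[OF i, unfolded comp_def])
  finally show ?thesis by (simp add: sum.distrib)
qed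

lemma HT_insert:
  assumes "k \<notin> Q" "finite Q"
  shows "apply_H k (HT Q \<psi>) = HT (insert k Q) \<psi>"
proof
  fix x
  have A: "HT Q \<psi> (x(k:=b)) = hc ^ card Q * (\<Sum>z\<in>conf Q. (\<Prod>q\<in>Q. sg (x q \<and> z q)) * \<psi> (ov x (z(k:=b)) (insert k Q)))" for b
  proof -
    have "HT Q \<psi> (x(k:=b)) = hc ^ card Q * (\<Sum>z\<in>conf Q. (\<Prod>q\<in>Q. sg ((x(k:=b)) q \<and> z q)) * \<psi> (ov (x(k:=b)) z Q))"
      by (simp add: HT_def)
    also have "\<dots> = hc ^ card Q * (\<Sum>z\<in>conf Q. (\<Prod>q\<in>Q. sg (x q \<and> z q)) * \<psi> (ov x (z(k:=b)) (insert k Q)))"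
    proof -
      have "(\<Prod>q\<in>Q. sg ((x(k:=b)) q \<and> z q)) = (\<Prod>q\<in>Q. sg (x q \<and> z q))" for z
        using assms(1) by (intro prod.cong) auto
      moreover have "ov (x(k:=b)) z Q = ov x (z(k:=b)) (insert k Q)" if "z \<in> conf Q" for z
        using assms(1) that by (auto simp: ov_def fun_eq_iff conf_def)
      ultimately show ?thesis by (intro arg_cong2[where f="(*)"] refl sum.cong) auto
    qed
    finally show ?thesis .
  qed
  have P: "(\<Prod>q\<in>insert k Q. sg (x q \<and> (z(k:=b)) q)) = sg (x k \<and> b) * (\<Prod>q\<in>Q. sg (x q \<and> z q))" for z b
  proof -
    have "(\<Prod>q\<in>insert k Q. sg (x q \<and> (z(k:=b)) q)) = sg (x k \<and> b) * (\<Prod>q\<in>Q. sg (x q \<and> (z(k:=b)) q))"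
      using assms by (simp add: prod.insert)
    also have "(\<Prod>q\<in>Q. sg (x q \<and> (z(k:=b)) q)) = (\<Prod>q\<in>Q. sg (x q \<and> z q))"
      using assms(1) by (intro prod.cong) auto
    finally show ?thesis .
  qed
  have zk: "z \<in> conf Q \<Longrightarrow> z(k:=False) = z" for z
    using assms(1) by (auto simp: conf_def fun_eq_iff)
  have "HT (insert k Q) \<psi> x = hc ^ card (insert k Q) * (\<Sum>z\<in>conf Q.
      (\<Prod>q\<in>insert k Q. sg (x q \<and> (z(k:=False)) q)) * \<psi> (ov x (z(k:=False)) (insert k Q)) +
      (\<Prod>q\<in>insert k Q. sg (x q \<and> (z(k:=True)) q)) * \<psi> (ov x (z(k:=True)) (insert k Q)))"
    unfolding HT_def sum_conf_insert[OF assms] by (intro arg_cong2[where f="(*)"] refl sum.cong) (auto simp: zk)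
  also have "\<dots> = hc * hc ^ card Q * (\<Sum>z\<in>conf Q.
      (\<Prod>q\<in>Q. sg (x q \<and> z q)) * \<psi> (ov x (z(k:=False)) (insert k Q)) +
      sg (x k) * ((\<Prod>q\<in>Q. sg (x q \<and> z q)) * \<psi> (ov x (z(k:=True)) (insert k Q))))"
    unfolding P using assms by (simp add: sg_def)
  also have "\<dots> = hc * (HT Q \<psi> (x(k:=False)) + sg (x k) * HT Q \<psi> (x(k:=True)))"
    unfolding A by (simp add: sum.distrib sum_distrib_left algebra_simps)
  also have "\<dots> = apply_H k (HT Q \<psi>) x" by (simp add: apply_H_eq)
  finally show "apply_H k (HT Q \<psi>) x = HT (insert k Q) \<psi> x" ..
qed

lemma fold_H_HT:
  "distinct L \<Longrightarrow> set L \<inter> Q = {} \<Longrightarrow> finite Q \<Longrightarrow> fold apply_H L (HT Q \<psi>) = HT (Q \<union> set L) \<psi>"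
proof (induction L arbitrary: Q)
  case Nil then show ?case by simp
next
  case (Cons a L)
  have "fold apply_H (a # L) (HT Q \<psi>) = fold apply_H L (HT (insert a Q) \<psi>)"
    using Cons.prems by (simp add: HT_insert)
  also have "\<dots> = HT (insert a Q \<union> set L) \<psi>"
    using Cons by (intro Cons.IH) auto
  finally show ?case by simp
qed

lemma fold_H: "distinct L \<Longrightarrow> fold apply_H L \<psi> = HT (set L) \<psi>"
  using fold_H_HT[of L "{}" \<psi>] by (simp add: HT_empty)



definition ph :: "bool \<Rightarrow> complex" where "ph b = (if b then \<i> else 1)"

lemma prodl_set: "distinct xs \<Longrightarrow> prod_list (map f xs) = prod f (set xs)"
  by (induct xs) simp_all

lemma apply_CZ_eq: "apply_CZ j k \<psi> x = sg (x j \<and> x k) * \<psi> x"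
proof -
  have "czgate j k = dg (\<lambda>a. if a j \<and> a k then -1 else 1)"
    by (auto simp: czgate_def dg_def fun_eq_iff)
  then show ?thesis unfolding apply_CZ_def
    by (simp add: apply_on_dg restr_def sg_def)
qed

lemma apply_S_eq: "apply_S k \<psi> x = ph (x k) * \<psi> x"
proof -
  have "sgate k = dg (\<lambda>a. if a k then \<i> else 1)"
    by (auto simp: sgate_def dg_def fun_eq_iff)
  then show ?thesis unfolding apply_S_def
    by (simp add: apply_on_dg restr_def ph_def)
qed

lemma fold_CZ: "fold (\<lambda>(j, k). apply_CZ j k) E \<psi> x = prod_list (map (\<lambda>(j,k). sg (x j \<and> x k)) E) * \<psi> x"
proof (induction E arbitrary: \<psi>)
  case Nil then show ?case by simp
next
  case (Cons e E)
  obtain j k where e: "e = (j,k)" by force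
  show ?case using Cons[of "apply_CZ j k \<psi>"] by (simp add: e apply_CZ_eq mult.assoc)
qed

lemma HT_ket0:
  assumes "finite Q"
  shows "HT Q ket0 x = hc ^ card Q * (if x \<in> conf Q then 1 else 0)"
proof -
  have "(\<Sum>z\<in>conf Q. (\<Prod>q\<in>Q. sg (x q \<and> z q)) * ket0 (ov x z Q)) =
        (\<Sum>z\<in>conf Q. if z = (\<lambda>_. False) then (if x \<in> conf Q then 1 else 0) else 0)"
  proof (intro sum.cong refl)
    fix z assume z: "z \<in> conf Q"
    show "(\<Prod>q\<in>Q. sg (x q \<and> z q)) * ket0 (ov x z Q) = (if z = (\<lambda>_. False) then (if x \<in> conf Q then 1 else 0) else 0)"
    proof (cases "z = (\<lambda>_. False)")
      case True
      then show ?thesis by (auto simp: ket0_def ov_def conf_def sg_def)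
    next
      case False
      then obtain q where "z q" by auto
      then have "q \<in> Q" using z by (auto simp: conf_def)
      then have "ket0 (ov x z Q) = 0" using \<open>z q\<close> by (auto simp: ov_def ket0_def)
      then show ?thesis using False by simp
    qed
  qed
  also have "\<dots> = (if x \<in> conf Q then 1 else 0)"
    using finite_conf[OF assms] by (simp add: conf_def)
  finally show ?thesis by (simp add: HT_def)
qed

abbreviation nxt :: "nat \<Rightarrow> nat \<Rightarrow> nat" where "nxt n j \<equiv> Suc j mod n"

definition Phi :: "nat \<Rightarrow> bool \<Rightarrow> bool \<Rightarrow> bool \<Rightarrow> bits \<Rightarrow> complex" where
  "Phi d b0 b1 b2 z = (\<Prod>j<3*d. sg (z j \<and> z (nxt (3*d) j))) *
      ph (b0 \<and> z 0) * ph (b1 \<and> z d) * ph (b2 \<and> z (2*d))"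

lemma graph_state_eq:
  "graph_state d x = (\<Prod>j<3*d. sg (x j \<and> x (nxt (3*d) j))) * (hc ^ (3*d) * (if x \<in> conf {..<3*d} then 1 else 0))"
proof -
  have "fold apply_H [0..<3 * d] ket0 = HT {..<3*d} ket0"
    by (simp add: fold_H atLeast0LessThan)
  then show ?thesis
    unfolding graph_state_def fold_CZ cycle_edges_def
    by (simp add: HT_ket0 prodl_set comp_def atLeast0LessThan)
qed

lemma pre_state:
  "fold (\<lambda>i. if [b0,b1,b2] ! i then apply_S (d * i) else id) [0..<3] (graph_state d) x =
    hc ^ (3*d) * (if x \<in> conf {..<3*d} then 1 else 0) * Phi d b0 b1 b2 x"
  by (simp add: upt_rec apply_S_eq graph_state_eq Phi_def ph_def mult_2)

lemma ov_conf: "x \<in> conf S \<Longrightarrow> z \<in> conf S \<Longrightarrow> ov x z S = z"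
  by (auto simp: ov_def conf_def fun_eq_iff)

definition Gs :: "nat \<Rightarrow> bool \<Rightarrow> bool \<Rightarrow> bool \<Rightarrow> bits \<Rightarrow> bits \<Rightarrow> complex" where
  "Gs d b0 b1 b2 m z = (\<Prod>q<3*d. sg (m q \<and> z q)) * Phi d b0 b1 b2 z"

lemma process_state_eq:
  assumes "m \<in> conf {..<3*d}"
  shows "process_state d b0 b1 b2 m = hc ^ (3*d) * hc ^ (3*d) * (\<Sum>z\<in>conf {..<3*d}. Gs d b0 b1 b2 m z)"
proof -
  let ?p = "fold (\<lambda>i. if [b0,b1,b2] ! i then apply_S (d * i) else id) [0..<3] (graph_state d)"
  have "process_state d b0 b1 b2 m = HT {..<3*d} ?p m"
    unfolding process_state_def Let_def by (simp add: fold_H atLeast0LessThan)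
  also have "\<dots> = hc ^ (3*d) * (\<Sum>z\<in>conf {..<3*d}. (\<Prod>q<3*d. sg (m q \<and> z q)) * ?p (ov m z {..<3*d}))"
    by (simp add: HT_def)
  also have "\<dots> = hc ^ (3*d) * (\<Sum>z\<in>conf {..<3*d}. hc ^ (3*d) * Gs d b0 b1 b2 m z)"
  proof -
    have "(\<Prod>q<3*d. sg (m q \<and> z q)) * ?p (ov m z {..<3*d}) = hc ^ (3*d) * Gs d b0 b1 b2 m z"
      if "z \<in> conf {..<3*d}" for z
      using that by (simp add: pre_state ov_conf[OF assms] Gs_def)
    then show ?thesis by (simp cong: sum.cong)
  qed
  finally show ?thesis by (simp add: sum_distrib_left mult.assoc)
qed



definition xr :: "bits \<Rightarrow> bits \<Rightarrow> bits" where "xr z a = (\<lambda>q. z q \<noteq> a q)"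
definition prv :: "nat \<Rightarrow> nat \<Rightarrow> nat" where "prv n j = (if j = 0 then n - 1 else j - 1)"

lemma nxt_eq: "j < n \<Longrightarrow> nxt n j = (if Suc j = n then 0 else Suc j)"
  by auto

lemma prod_shift:
  assumes "0 < n"
  shows "(\<Prod>j<n. f (nxt n j)) = (\<Prod>j<n. (f j :: complex))"
  apply (rule prod.reindex_bij_witness[where i="prv n" and j="nxt n"])
  using assms by (auto simp: prv_def nxt_eq)

lemma sg_xor: "sg (p \<and> (q \<noteq> r)) = sg (p \<and> q) * sg (p \<and> r)"
  by (auto simp: sg_def)
lemma sg_xor2: "sg ((p \<noteq> q) \<and> r) = sg (p \<and> r) * sg (q \<and> r)"
  by (auto simp: sg_def)
lemma sg4: "sg ((p \<noteq> q) \<and> (r \<noteq> s)) = sg (p \<and> r) * sg (q \<and> s) * sg (p \<and> s) * sg (q \<and> r)"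
  by (auto simp: sg_def)
lemma sg_sq: "sg p * sg p = 1" by (auto simp: sg_def)

lemma prod_sg_card: "finite A \<Longrightarrow> (\<Prod>q\<in>A. sg (P q)) = (-1) ^ card {q\<in>A. P q}"
proof (induction A rule: finite_induct)
  case empty then show ?case by simp
next
  case (insert x F)
  have "{q \<in> insert x F. P q} = (if P x then insert x {q\<in>F. P q} else {q\<in>F. P q})" by auto
  then show ?case using insert by (auto simp: sg_def)
qed

definition Kf :: "nat \<Rightarrow> bool \<Rightarrow> bool \<Rightarrow> bool \<Rightarrow> bits \<Rightarrow> bits \<Rightarrow> complex" where
  "Kf d b0 b1 b2 m a = (\<Prod>q<3*d. sg (m q \<and> a q)) * (\<Prod>j<3*d. sg (a j \<and> a (nxt (3*d) j))) *
     ph (b0 \<and> a 0) * ph (b1 \<and> a d) * ph (b2 \<and> a (2*d))"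

definition Ccond :: "nat \<Rightarrow> bool \<Rightarrow> bool \<Rightarrow> bool \<Rightarrow> bits \<Rightarrow> bool" where
  "Ccond d b0 b1 b2 a \<longleftrightarrow> (\<forall>j<3*d. (a (prv (3*d) j) \<noteq> a (nxt (3*d) j)) =
      (((j = 0 \<and> b0) \<or> (j = d \<and> b1) \<or> (j = 2*d \<and> b2)) \<and> a j))"

lemma ph_xor: "ph (b \<and> (z \<noteq> a)) = ph (b \<and> z) * (if b \<and> a then \<i> * sg z else 1)"
  by (auto simp: ph_def sg_def)

lemma flip:
  assumes d: "0 < d" and C: "Ccond d b0 b1 b2 a"
  shows "Gs d b0 b1 b2 m (xr z a) = Kf d b0 b1 b2 m a * Gs d b0 b1 b2 m z"
proof -
  define n where "n = 3*d"
  have n: "0 < n" using d by (simp add: n_def)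
  have 1: "(\<Prod>q<n. sg (m q \<and> xr z a q)) = (\<Prod>q<n. sg (m q \<and> z q)) * (\<Prod>q<n. sg (m q \<and> a q))"
    unfolding xr_def sg_xor by (simp add: prod.distrib)
  have 2: "(\<Prod>j<n. sg (xr z a j \<and> xr z a (nxt n j))) =
     (\<Prod>j<n. sg (z j \<and> z (nxt n j))) * (\<Prod>j<n. sg (a j \<and> a (nxt n j))) *
     ((\<Prod>j<n. sg (z j \<and> a (nxt n j))) * (\<Prod>j<n. sg (a j \<and> z (nxt n j))))"
    unfolding xr_def sg4 by (simp add: prod.distrib mult_ac)
  have 3: "(\<Prod>j<n. sg (a j \<and> z (nxt n j))) = (\<Prod>j<n. sg (a (prv n j) \<and> z j))"
  proof -
    have "(\<Prod>j<n. sg (a j \<and> z (nxt n j))) = (\<Prod>j<n. (\<lambda>k. sg (a (prv n k) \<and> z k)) (nxt n j))"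
      by (intro prod.cong refl) (auto simp: prv_def nxt_eq)
    then show ?thesis using prod_shift[OF n] by simp
  qed
  define Y where "Y j = ((j = 0 \<and> b0) \<or> (j = d \<and> b1) \<or> (j = 2*d \<and> b2))" for j
  have 4: "(\<Prod>j<n. sg (z j \<and> a (nxt n j))) * (\<Prod>j<n. sg (a (prv n j) \<and> z j)) =
      (\<Prod>j<n. sg (z j \<and> Y j \<and> a j))"
  proof -
    have "(\<Prod>j<n. sg (z j \<and> a (nxt n j))) * (\<Prod>j<n. sg (a (prv n j) \<and> z j)) =
        (\<Prod>j<n. sg (z j \<and> (a (prv n j) \<noteq> a (nxt n j))))"
      unfolding sg_xor prod.distrib by (simp add: mult_ac conj_commute)
    also have "\<dots> = (\<Prod>j<n. sg (z j \<and> Y j \<and> a j))"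
      using C by (intro prod.cong refl) (auto simp: Ccond_def n_def Y_def)
    finally show ?thesis .
  qed
  have 5: "(\<Prod>j<n. sg (z j \<and> Y j \<and> a j)) = sg (z 0 \<and> b0 \<and> a 0) * sg (z d \<and> b1 \<and> a d) * sg (z (2*d) \<and> b2 \<and> a (2*d))"
  proof -
    have "(\<Prod>j<n. sg (z j \<and> Y j \<and> a j)) = (\<Prod>j\<in>{0,d,2*d}. sg (z j \<and> Y j \<and> a j))"
      by (rule prod.mono_neutral_right) (use d in \<open>auto simp: n_def Y_def sg_def\<close>)
    also have "\<dots> = sg (z 0 \<and> b0 \<and> a 0) * sg (z d \<and> b1 \<and> a d) * sg (z (2*d) \<and> b2 \<and> a (2*d))"
      using d by (simp add: Y_def mult_ac)
    finally show ?thesis .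
  qed
  have 6: "sg (z s \<and> b \<and> a s) * (ph (b \<and> z s) * (if b \<and> a s then \<i> * sg (z s) else 1)) = ph (b \<and> z s) * ph (b \<and> a s)" for s b
    by (auto simp: sg_def ph_def)
  have "Gs d b0 b1 b2 m (xr z a) =
     ((\<Prod>q<n. sg (m q \<and> z q)) * (\<Prod>q<n. sg (m q \<and> a q))) *
     ((\<Prod>j<n. sg (z j \<and> z (nxt n j))) * (\<Prod>j<n. sg (a j \<and> a (nxt n j))) *
      (sg (z 0 \<and> b0 \<and> a 0) * sg (z d \<and> b1 \<and> a d) * sg (z (2*d) \<and> b2 \<and> a (2*d)))) *
     (ph (b0 \<and> z 0) * (if b0 \<and> a 0 then \<i> * sg (z 0) else 1)) *
     (ph (b1 \<and> z d) * (if b1 \<and> a d then \<i> * sg (z d) else 1)) *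
     (ph (b2 \<and> z (2*d)) * (if b2 \<and> a (2*d) then \<i> * sg (z (2*d)) else 1))"
    unfolding Gs_def Phi_def n_def[symmetric] 1 2 3 4 5
    unfolding xr_def ph_xor by (simp only: mult_ac)
  also have "\<dots> = ((\<Prod>q<n. sg (m q \<and> z q)) * (\<Prod>q<n. sg (m q \<and> a q))) *
     ((\<Prod>j<n. sg (z j \<and> z (nxt n j))) * (\<Prod>j<n. sg (a j \<and> a (nxt n j)))) *
     (sg (z 0 \<and> b0 \<and> a 0) * (ph (b0 \<and> z 0) * (if b0 \<and> a 0 then \<i> * sg (z 0) else 1))) *
     (sg (z d \<and> b1 \<and> a d) * (ph (b1 \<and> z d) * (if b1 \<and> a d then \<i> * sg (z d) else 1))) *
     (sg (z (2*d) \<and> b2 \<and> a (2*d)) * (ph (b2 \<and> z (2*d)) * (if b2 \<and> a (2*d) then \<i> * sg (z (2*d)) else 1)))"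
    by (simp only: mult_ac)
  also have "\<dots> = Kf d b0 b1 b2 m a * Gs d b0 b1 b2 m z"
    unfolding 6 Kf_def Gs_def Phi_def n_def[symmetric] by (simp only: mult_ac)
  finally show ?thesis .
qed

lemma xr_conf: "z \<in> conf S \<Longrightarrow> a \<in> conf S \<Longrightarrow> xr z a \<in> conf S"
  by (auto simp: xr_def conf_def)

lemma xr_xr: "xr (xr z a) a = z"
  by (auto simp: xr_def fun_eq_iff)

lemma Lambda_K:
  assumes d: "0 < d" and C: "Ccond d b0 b1 b2 a" and a: "a \<in> conf {..<3*d}"
    and m: "m \<in> Lambda d b0 b1 b2"
  shows "Kf d b0 b1 b2 m a = 1"
proof (rule ccontr)
  assume K: "Kf d b0 b1 b2 m a \<noteq> 1"
  let ?S = "\<Sum>z\<in>conf {..<3*d}. Gs d b0 b1 b2 m z"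
  have "?S = (\<Sum>z\<in>conf {..<3*d}. Gs d b0 b1 b2 m (xr z a))"
    by (rule sum.reindex_bij_witness[where i="\<lambda>z. xr z a" and j="\<lambda>z. xr z a"])
       (auto simp: xr_conf a xr_xr)
  also have "\<dots> = Kf d b0 b1 b2 m a * ?S"
    by (simp add: flip[OF d C] sum_distrib_left)
  finally have "?S = 0" using K
    by (metis mult_cancel_right1 mult.commute)
  moreover have "m \<in> conf {..<3*d}" using m by (simp add: Lambda_def)
  ultimately have "process_state d b0 b1 b2 m = 0" by (simp add: process_state_eq)
  then show False using m by (simp add: Lambda_def)
qed



definition aE :: "nat \<Rightarrow> bits" where "aE d = (\<lambda>j. j < 3*d \<and> even j)"
definition aO :: "nat \<Rightarrow> bits" where "aO d = (\<lambda>j. j < 3*d \<and> odd j)"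
definition aB :: "nat \<Rightarrow> bits" where "aB d = (\<lambda>j. j < 3*d \<and> (even j \<or> (0 < j \<and> j < d)))"
definition aC :: "nat \<Rightarrow> bits" where "aC d = (\<lambda>j. j < 3*d \<and> (even j \<or> 2*d < j))"
definition aD :: "nat \<Rightarrow> bits" where "aD d = (\<lambda>j. j < 3*d \<and> (even j \<or> (d < j \<and> j < 2*d)))"

lemma even_pred: "0 < j \<Longrightarrow> even (j - 1) \<longleftrightarrow> odd (j::nat)"
  by (cases j) auto

lemma Ccond_cases:
  assumes "\<And>j. j = 0 \<Longrightarrow> (a (3*d - 1) \<noteq> a 1) = (((j = 0 \<and> b0) \<or> (j = d \<and> b1) \<or> (j = 2*d \<and> b2)) \<and> a j)"
    and "\<And>j. Suc j = 3*d \<Longrightarrow> 0 < j \<Longrightarrow> (a (j - 1) \<noteq> a 0) = (((j = 0 \<and> b0) \<or> (j = d \<and> b1) \<or> (j = 2*d \<and> b2)) \<and> a j)"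
    and "\<And>j. 0 < j \<Longrightarrow> Suc j < 3*d \<Longrightarrow> (a (j - 1) \<noteq> a (Suc j)) = (((j = 0 \<and> b0) \<or> (j = d \<and> b1) \<or> (j = 2*d \<and> b2)) \<and> a j)"
    and "1 < 3*d"
  shows "Ccond d b0 b1 b2 a"
  unfolding Ccond_def
proof (intro allI impI)
  fix j assume j: "j < 3*d"
  show "(a (prv (3 * d) j) \<noteq> a (nxt (3 * d) j)) = (((j = 0 \<and> b0) \<or> (j = d \<and> b1) \<or> (j = 2 * d \<and> b2)) \<and> a j)"
  proof (cases "j = 0")
    case True then show ?thesis using assms(1)[of j] assms(4) by (simp add: prv_def)
  next
    case False
    then show ?thesis
    proof (cases "Suc j = 3*d")
      case True then show ?thesis using assms(2)[of j] \<open>j \<noteq> 0\<close> by (simp add: prv_def)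
    next
      case F2: False
      then show ?thesis using assms(3)[of j] \<open>j \<noteq> 0\<close> j by (simp add: prv_def nxt_eq)
    qed
  qed
qed


lemma CE: assumes "even d" "0 < d" shows "Ccond d False False False (aE d)"
proof -
  obtain e where e: "d = 2*e" using assms(1) by blast
  have e0: "0 < e" using assms e by simp
  show ?thesis
  proof (rule Ccond_cases)
    fix j :: nat assume "j = 0"
    then show "(aE d (3*d - 1) \<noteq> aE d 1) = (((j = 0 \<and> False) \<or> (j = d \<and> False) \<or> (j = 2*d \<and> False)) \<and> aE d j)"
      using e0 by (simp add: aE_def e even_pred; arith)
  next
    fix j :: nat assume j: "Suc j = 3*d" "0 < j"
    have "even (Suc j)" using j(1) e by simp
    then have "odd j" by simp
    then show "(aE d (j - 1) \<noteq> aE d 0) = (((j = 0 \<and> False) \<or> (j = d \<and> False) \<or> (j = 2*d \<and> False)) \<and> aE d j)"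
      using e0 j by (simp add: aE_def e even_pred; arith)
  next
    fix j :: nat assume "0 < j" "Suc j < 3*d"
    then show "(aE d (j - 1) \<noteq> aE d (Suc j)) = (((j = 0 \<and> False) \<or> (j = d \<and> False) \<or> (j = 2*d \<and> False)) \<and> aE d j)"
      using e0 by (cases "even j"; auto simp: aE_def e even_pred; arith)
  qed (use e0 e in simp)
qed

lemma CO: assumes "even d" "0 < d" shows "Ccond d True True True (aO d)"
proof -
  obtain e where e: "d = 2*e" using assms(1) by blast
  have e0: "0 < e" using assms e by simp
  show ?thesis
  proof (rule Ccond_cases)
    fix j :: nat assume "j = 0"
    then show "(aO d (3*d - 1) \<noteq> aO d 1) = (((j = 0 \<and> True) \<or> (j = d \<and> True) \<or> (j = 2*d \<and> True)) \<and> aO d j)"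
      using e0 by (simp add: aO_def e even_pred; arith)
  next
    fix j :: nat assume j: "Suc j = 3*d" "0 < j"
    have "even (Suc j)" using j(1) e by simp
    then have "odd j" by simp
    then show "(aO d (j - 1) \<noteq> aO d 0) = (((j = 0 \<and> True) \<or> (j = d \<and> True) \<or> (j = 2*d \<and> True)) \<and> aO d j)"
      using e0 j by (simp add: aO_def e even_pred; arith)
  next
    fix j :: nat assume "0 < j" "Suc j < 3*d"
    then show "(aO d (j - 1) \<noteq> aO d (Suc j)) = (((j = 0 \<and> True) \<or> (j = d \<and> True) \<or> (j = 2*d \<and> True)) \<and> aO d j)"
      using e0 by (cases "even j"; auto simp: aO_def e even_pred; arith)
  qed (use e0 e in simp)
qed

lemma CB: assumes "even d" "0 < d" shows "Ccond d True True False (aB d)"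
proof -
  obtain e where e: "d = 2*e" using assms(1) by blast
  have e0: "0 < e" using assms e by simp
  show ?thesis
  proof (rule Ccond_cases)
    fix j :: nat assume "j = 0"
    then show "(aB d (3*d - 1) \<noteq> aB d 1) = (((j = 0 \<and> True) \<or> (j = d \<and> True) \<or> (j = 2*d \<and> False)) \<and> aB d j)"
      using e0 by (simp add: aB_def e even_pred; arith)
  next
    fix j :: nat assume j: "Suc j = 3*d" "0 < j"
    have "even (Suc j)" using j(1) e by simp
    then have "odd j" by simp
    then show "(aB d (j - 1) \<noteq> aB d 0) = (((j = 0 \<and> True) \<or> (j = d \<and> True) \<or> (j = 2*d \<and> False)) \<and> aB d j)"
      using e0 j by (simp add: aB_def e even_pred; arith)
  next
    fix j :: nat assume "0 < j" "Suc j < 3*d"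
    then show "(aB d (j - 1) \<noteq> aB d (Suc j)) = (((j = 0 \<and> True) \<or> (j = d \<and> True) \<or> (j = 2*d \<and> False)) \<and> aB d j)"
      using e0 by (cases "even j"; auto simp: aB_def e even_pred; arith)
  qed (use e0 e in simp)
qed

lemma CC: assumes "even d" "0 < d" shows "Ccond d True False True (aC d)"
proof -
  obtain e where e: "d = 2*e" using assms(1) by blast
  have e0: "0 < e" using assms e by simp
  show ?thesis
  proof (rule Ccond_cases)
    fix j :: nat assume "j = 0"
    then show "(aC d (3*d - 1) \<noteq> aC d 1) = (((j = 0 \<and> True) \<or> (j = d \<and> False) \<or> (j = 2*d \<and> True)) \<and> aC d j)"
      using e0 by (simp add: aC_def e even_pred; arith)
  next
    fix j :: nat assume j: "Suc j = 3*d" "0 < j"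
    have "even (Suc j)" using j(1) e by simp
    then have "odd j" by simp
    then show "(aC d (j - 1) \<noteq> aC d 0) = (((j = 0 \<and> True) \<or> (j = d \<and> False) \<or> (j = 2*d \<and> True)) \<and> aC d j)"
      using e0 j by (simp add: aC_def e even_pred; arith)
  next
    fix j :: nat assume "0 < j" "Suc j < 3*d"
    then show "(aC d (j - 1) \<noteq> aC d (Suc j)) = (((j = 0 \<and> True) \<or> (j = d \<and> False) \<or> (j = 2*d \<and> True)) \<and> aC d j)"
      using e0 by (cases "even j"; auto simp: aC_def e even_pred; arith)
  qed (use e0 e in simp)
qed

lemma CD: assumes "even d" "0 < d" shows "Ccond d False True True (aD d)"
proof -
  obtain e where e: "d = 2*e" using assms(1) by blast
  have e0: "0 < e" using assms e by simp
  show ?thesis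
  proof (rule Ccond_cases)
    fix j :: nat assume "j = 0"
    then show "(aD d (3*d - 1) \<noteq> aD d 1) = (((j = 0 \<and> False) \<or> (j = d \<and> True) \<or> (j = 2*d \<and> True)) \<and> aD d j)"
      using e0 by (simp add: aD_def e even_pred; arith)
  next
    fix j :: nat assume j: "Suc j = 3*d" "0 < j"
    have "even (Suc j)" using j(1) e by simp
    then have "odd j" by simp
    then show "(aD d (j - 1) \<noteq> aD d 0) = (((j = 0 \<and> False) \<or> (j = d \<and> True) \<or> (j = 2*d \<and> True)) \<and> aD d j)"
      using e0 j by (simp add: aD_def e even_pred; arith)
  next
    fix j :: nat assume "0 < j" "Suc j < 3*d"
    then show "(aD d (j - 1) \<noteq> aD d (Suc j)) = (((j = 0 \<and> False) \<or> (j = d \<and> True) \<or> (j = 2*d \<and> True)) \<and> aD d j)"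
      using e0 by (cases "even j"; auto simp: aD_def e even_pred; arith)
  qed (use e0 e in simp)
qed

lemma Lambda_par:
  assumes "0 < d" "Ccond d b0 b1 b2 a" "a \<in> conf {..<3*d}" "m \<in> Lambda d b0 b1 b2"
  shows "(-1::complex) ^ card {q\<in>{..<3*d}. m q \<and> a q} * (-1) ^ card {j\<in>{..<3*d}. a j \<and> a (nxt (3*d) j)} *
     ph (b0 \<and> a 0) * ph (b1 \<and> a d) * ph (b2 \<and> a (2*d)) = 1"
  using Lambda_K[OF assms] by (simp add: Kf_def prod_sg_card)

lemma pow_m1: "((-1::complex) ^ c = 1) = even c" "((-1::complex) ^ c = -1) = odd c" "((-1::complex) ^ c * \<i> * \<i> = 1) = odd c"
  by (auto simp: minus_one_power_iff)

lemma EE: assumes "even d" "0 < d" shows "{j\<in>{..<3*d}. aE d j \<and> aE d (nxt (3*d) j)} = {}"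
proof -
  obtain e where e: "d = 2*e" using assms(1) by blast
  have e0: "0 < e" using assms e by simp
  show ?thesis
  proof (rule set_eqI)
    fix j
    show "j \<in> {j\<in>{..<3*d}. aE d j \<and> aE d (nxt (3*d) j)} \<longleftrightarrow> j \<in> {}"
    proof (cases "j < 3*d")
      case True
      then show ?thesis
        using e0 by (cases "Suc j = 3*d"; cases "even j"; auto simp: aE_def e nxt_eq; arith)
    next
      case False
      then show ?thesis by (auto simp: aE_def e)
    qed
  qed
qed

lemma EO: assumes "even d" "0 < d" shows "{j\<in>{..<3*d}. aO d j \<and> aO d (nxt (3*d) j)} = {}"
proof -
  obtain e where e: "d = 2*e" using assms(1) by blast
  have e0: "0 < e" using assms e by simp
  show ?thesis
  proof (rule set_eqI)
    fix j
    show "j \<in> {j\<in>{..<3*d}. aO d j \<and> aO d (nxt (3*d) j)} \<longleftrightarrow> j \<in> {}"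
    proof (cases "j < 3*d")
      case True
      then show ?thesis
        using e0 by (cases "Suc j = 3*d"; cases "even j"; auto simp: aO_def e nxt_eq; arith)
    next
      case False
      then show ?thesis by (auto simp: aO_def e)
    qed
  qed
qed

lemma EB: assumes "even d" "0 < d" shows "{j\<in>{..<3*d}. aB d j \<and> aB d (nxt (3*d) j)} = {..<d}"
proof -
  obtain e where e: "d = 2*e" using assms(1) by blast
  have e0: "0 < e" using assms e by simp
  show ?thesis
  proof (rule set_eqI)
    fix j
    show "j \<in> {j\<in>{..<3*d}. aB d j \<and> aB d (nxt (3*d) j)} \<longleftrightarrow> j \<in> {..<d}"
    proof (cases "j < 3*d")
      case True
      then show ?thesis
        using e0 by (cases "Suc j = 3*d"; cases "even j"; auto simp: aB_def e nxt_eq; arith)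
    next
      case False
      then show ?thesis by (auto simp: aB_def e)
    qed
  qed
qed

lemma EC: assumes "even d" "0 < d" shows "{j\<in>{..<3*d}. aC d j \<and> aC d (nxt (3*d) j)} = {2*d..<3*d}"
proof -
  obtain e where e: "d = 2*e" using assms(1) by blast
  have e0: "0 < e" using assms e by simp
  show ?thesis
  proof (rule set_eqI)
    fix j
    show "j \<in> {j\<in>{..<3*d}. aC d j \<and> aC d (nxt (3*d) j)} \<longleftrightarrow> j \<in> {2*d..<3*d}"
    proof (cases "j < 3*d")
      case True
      then show ?thesis
        using e0 by (cases "Suc j = 3*d"; cases "even j"; auto simp: aC_def e nxt_eq; arith)
    next
      case False
      then show ?thesis by (auto simp: aC_def e)
    qed
  qed
qed

lemma ED: assumes "even d" "0 < d" shows "{j\<in>{..<3*d}. aD d j \<and> aD d (nxt (3*d) j)} = {d..<2*d}"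
proof -
  obtain e where e: "d = 2*e" using assms(1) by blast
  have e0: "0 < e" using assms e by simp
  show ?thesis
  proof (rule set_eqI)
    fix j
    show "j \<in> {j\<in>{..<3*d}. aD d j \<and> aD d (nxt (3*d) j)} \<longleftrightarrow> j \<in> {d..<2*d}"
    proof (cases "j < 3*d")
      case True
      then show ?thesis
        using e0 by (cases "Suc j = 3*d"; cases "even j"; auto simp: aD_def e nxt_eq; arith)
    next
      case False
      then show ?thesis by (auto simp: aD_def e)
    qed
  qed
qed

lemma parE: assumes "even d" "0 < d" "m \<in> Lambda d False False False"
  shows "even (card {q\<in>{..<3*d}. m q \<and> aE d q})"
proof -
  have a: "aE d \<in> conf {..<3*d}" by (auto simp: aE_def conf_def)
  have "(-1::complex) ^ card {q\<in>{..<3*d}. m q \<and> aE d q} * (-1) ^ card {j\<in>{..<3*d}. aE d j \<and> aE d (nxt (3*d) j)} *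
     ph (False \<and> aE d 0) * ph (False \<and> aE d d) * ph (False \<and> aE d (2*d)) = 1"
    by (rule Lambda_par[OF assms(2) CE[OF assms(1,2)] a assms(3)])
  then show ?thesis using assms(1,2) unfolding EE[OF assms(1,2)]
    by (simp add: aE_def ph_def pow_m1)
qed

lemma parO: assumes "even d" "0 < d" "m \<in> Lambda d True True True"
  shows "even (card {q\<in>{..<3*d}. m q \<and> aO d q})"
proof -
  have a: "aO d \<in> conf {..<3*d}" by (auto simp: aO_def conf_def)
  have "(-1::complex) ^ card {q\<in>{..<3*d}. m q \<and> aO d q} * (-1) ^ card {j\<in>{..<3*d}. aO d j \<and> aO d (nxt (3*d) j)} *
     ph (True \<and> aO d 0) * ph (True \<and> aO d d) * ph (True \<and> aO d (2*d)) = 1"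
    by (rule Lambda_par[OF assms(2) CO[OF assms(1,2)] a assms(3)])
  then show ?thesis using assms(1,2) unfolding EO[OF assms(1,2)]
    by (simp add: aO_def ph_def pow_m1)
qed

lemma parB: assumes "even d" "0 < d" "m \<in> Lambda d True True False"
  shows "odd (card {q\<in>{..<3*d}. m q \<and> aB d q})"
proof -
  have a: "aB d \<in> conf {..<3*d}" by (auto simp: aB_def conf_def)
  have "(-1::complex) ^ card {q\<in>{..<3*d}. m q \<and> aB d q} * (-1) ^ card {j\<in>{..<3*d}. aB d j \<and> aB d (nxt (3*d) j)} *
     ph (True \<and> aB d 0) * ph (True \<and> aB d d) * ph (False \<and> aB d (2*d)) = 1"
    by (rule Lambda_par[OF assms(2) CB[OF assms(1,2)] a assms(3)])
  then show ?thesis using assms(1,2) unfolding EB[OF assms(1,2)]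
    by (simp add: aB_def ph_def pow_m1)
qed

lemma parC: assumes "even d" "0 < d" "m \<in> Lambda d True False True"
  shows "odd (card {q\<in>{..<3*d}. m q \<and> aC d q})"
proof -
  have a: "aC d \<in> conf {..<3*d}" by (auto simp: aC_def conf_def)
  have "(-1::complex) ^ card {q\<in>{..<3*d}. m q \<and> aC d q} * (-1) ^ card {j\<in>{..<3*d}. aC d j \<and> aC d (nxt (3*d) j)} *
     ph (True \<and> aC d 0) * ph (False \<and> aC d d) * ph (True \<and> aC d (2*d)) = 1"
    by (rule Lambda_par[OF assms(2) CC[OF assms(1,2)] a assms(3)])
  then show ?thesis using assms(1,2) unfolding EC[OF assms(1,2)]
    by (simp add: aC_def ph_def pow_m1)
qed

lemma parD: assumes "even d" "0 < d" "m \<in> Lambda d False True True"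
  shows "odd (card {q\<in>{..<3*d}. m q \<and> aD d q})"
proof -
  have a: "aD d \<in> conf {..<3*d}" by (auto simp: aD_def conf_def)
  have "(-1::complex) ^ card {q\<in>{..<3*d}. m q \<and> aD d q} * (-1) ^ card {j\<in>{..<3*d}. aD d j \<and> aD d (nxt (3*d) j)} *
     ph (False \<and> aD d 0) * ph (True \<and> aD d d) * ph (True \<and> aD d (2*d)) = 1"
    by (rule Lambda_par[OF assms(2) CD[OF assms(1,2)] a assms(3)])
  then show ?thesis using assms(1,2) unfolding ED[OF assms(1,2)]
    by (simp add: aD_def ph_def pow_m1)
qed



definition Pc :: "nat \<Rightarrow> nat \<Rightarrow> nat \<Rightarrow> int" where
  "Pc d s v = min (int d) (min \<bar>int v - int s\<bar> (3 * int d - \<bar>int v - int s\<bar>))"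

definition Dp :: "nat \<Rightarrow> nat \<Rightarrow> nat \<Rightarrow> int" where
  "Dp d i v = (if v < 3*d then Pc d (d*i) v + 1 else if v = 3*d + i then 0 else int d + 2)"

lemma lip_min: "\<bar>a - a'\<bar> \<le> 1 \<Longrightarrow> \<bar>b - b'\<bar> \<le> 1 \<Longrightarrow> \<bar>min a b - min a' b'\<bar> \<le> (1::int)"
  by arith

lemma Pc_step: "\<bar>Pc d s (Suc v) - Pc d s v\<bar> \<le> 1"
proof -
  have A: "\<bar>\<bar>int (Suc v) - int s\<bar> - \<bar>int v - int s\<bar>\<bar> \<le> 1" by arith
  have B: "\<bar>(3 * int d - \<bar>int (Suc v) - int s\<bar>) - (3 * int d - \<bar>int v - int s\<bar>)\<bar> \<le> 1" using A by arith
  show ?thesis unfolding Pc_def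
    by (rule lip_min) (simp, rule lip_min[OF A B])
qed

lemma Pc_wrap:
  assumes "0 < d" "i < 3"
  shows "\<bar>Pc d (d*i) 0 - Pc d (d*i) (3*d - 1)\<bar> \<le> 1"
proof -
  have "i = 0 \<or> i = 1 \<or> i = 2" using assms by auto
  then show ?thesis using assms
    by (auto simp: Pc_def of_nat_diff)
qed

lemma Pc_site:
  assumes "0 < d" "i < 3" "i' < 3"
  shows "Pc d (d*i) (d*i') = (if i = i' then 0 else int d)"
proof -
  have "i = 0 \<or> i = 1 \<or> i = 2" "i' = 0 \<or> i' = 1 \<or> i' = 2" using assms by auto
  then show ?thesis using assms
    by (auto simp: Pc_def)
qed

lemma Dp_lip:
  assumes d: "0 < d" and i: "i < 3" and adj: "net_adj d u v"
  shows "Dp d i v \<le> Dp d i u + 1"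
proof (cases "u < 3*d \<and> v < 3*d \<and> (v = Suc u mod (3*d) \<or> u = Suc v mod (3*d))")
  case True
  then have u: "u < 3*d" and v: "v < 3*d" and e: "v = Suc u mod (3*d) \<or> u = Suc v mod (3*d)" by auto
  have "\<bar>Pc d (d*i) v - Pc d (d*i) u\<bar> \<le> 1"
  proof (cases "v = Suc u mod (3*d)")
    case True
    show ?thesis
    proof (cases "Suc u = 3*d")
      case True
      then have "v = 0" "u = 3*d - 1" using \<open>v = Suc u mod (3*d)\<close> by auto
      then show ?thesis using Pc_wrap[OF d i] by simp
    next
      case False
      then have "v = Suc u" using \<open>v = Suc u mod (3*d)\<close> u by auto
      then show ?thesis using Pc_step[of d "d*i" u] by simp
    qed
  next
    case False
    then have e2: "u = Suc v mod (3*d)" using e by auto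
    show ?thesis
    proof (cases "Suc v = 3*d")
      case True
      then have "u = 0" "v = 3*d - 1" using e2 by auto
      then show ?thesis using Pc_wrap[OF d i] by simp
    next
      case False
      then have "u = Suc v" using e2 v by auto
      then show ?thesis using Pc_step[of d "d*i" v] by simp
    qed
  qed
  then show ?thesis using u v by (simp add: Dp_def)
next
  case False
  then obtain i' where i': "i' < 3" and "(u = d * i' \<and> v = 3 * d + i') \<or> (v = d * i' \<and> u = 3 * d + i')"
    using adj unfolding net_adj_def by blast
  moreover have "i' = 0 \<or> i' = 1 \<or> i' = 2" using i' by auto
  ultimately show ?thesis using d i Pc_site[OF d i i'] by (auto simp: Dp_def)
qed

lemma crun_local:
  assumes d: "0 < d" and i: "i < 3" and inp: "\<And>v. v \<noteq> 3*d + i \<Longrightarrow> inp v = inp' v"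
  shows "int t < Dp d i v \<Longrightarrow> crun d init msg upd inp r t v = crun d init msg upd inp' r t v"
proof (induction t arbitrary: v)
  case 0
  then have "v \<noteq> 3*d + i" by (auto simp: Dp_def)
  then show ?case by (simp add: inp)
next
  case (Suc t)
  have "(\<lambda>u. if net_adj d u v then Some (msg t u v (crun d init msg upd inp r t u)) else None) =
        (\<lambda>u. if net_adj d u v then Some (msg t u v (crun d init msg upd inp' r t u)) else None)"
  proof
    fix u show "(if net_adj d u v then Some (msg t u v (crun d init msg upd inp r t u)) else None) =
        (if net_adj d u v then Some (msg t u v (crun d init msg upd inp' r t u)) else None)"
    proof (cases "net_adj d u v")
      case True
      then have "int t < Dp d i u" using Dp_lip[OF d i True] Suc.prems by simp
      then show ?thesis using Suc.IH by simp
    qed simp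
  qed
  moreover have "crun d init msg upd inp r t v = crun d init msg upd inp' r t v"
    using Suc by simp
  ultimately show ?case by simp
qed

definition reg :: "nat \<Rightarrow> nat \<Rightarrow> nat" where
  "reg d j = (if 2*j < d \<or> 5*d \<le> 2*j then 0 else if 2*j < 3*d then 1 else 2)"

lemma reg_far:
  assumes "j < 3*d" "i < 3" "i \<noteq> reg d j" "2*T \<le> d"
  shows "int T < Dp d i j"
proof -
  have "i = 0 \<or> i = 1 \<or> i = 2" using assms by auto
  then have "d \<le> 2 * Pc d (d*i) j" using assms unfolding reg_def Pc_def
    by (auto simp: min_def split: if_splits)
  then show ?thesis using assms by (simp add: Dp_def)
qed



lemma card_sum: "finite A \<Longrightarrow> card {q\<in>A. P q} = (\<Sum>q\<in>A. if P q then 1 else 0)"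
proof -
  assume f: "finite A"
  have "(\<Sum>q\<in>A. if P q then 1 else 0) = (\<Sum>q\<in>{q\<in>A. P q}. (1::nat))"
    by (rule sum.inter_filter[symmetric]) (rule f)
  then show ?thesis by simp
qed

lemma crun_reg:
  assumes d: "0 < d" and j: "j < 3*d" and T: "2*T \<le> d"
    and c0: "reg d j \<noteq> 0 \<or> b0 = b0'" and c1: "reg d j \<noteq> 1 \<or> b1 = b1'" and c2: "reg d j \<noteq> 2 \<or> b2 = b2'"
  shows "crun d init msg upd (net_input d b0 b1 b2) r T j = crun d init msg upd (net_input d b0' b1' b2') r T j"
proof -
  have s0: "crun d init msg upd (net_input d x0 x1 x2) r T j = crun d init msg upd (net_input d y0 x1 x2) r T j"
    if "reg d j \<noteq> 0 \<or> x0 = y0" for x0 x1 x2 y0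
  proof (cases "x0 = y0")
    case False
    then have "reg d j \<noteq> 0" using that by auto
    show ?thesis
    proof (rule crun_local[OF d])
      show "(0::nat) < 3" by simp
      show "int T < Dp d 0 j" by (rule reg_far[OF j]) (use \<open>reg d j \<noteq> 0\<close> T in auto)
      fix v :: nat assume "v \<noteq> 3*d + 0"
      then show "net_input d x0 x1 x2 v = net_input d y0 x1 x2 v"
        by (simp add: net_input_def)
    qed
  qed simp
  have s1: "crun d init msg upd (net_input d x0 x1 x2) r T j = crun d init msg upd (net_input d x0 y1 x2) r T j"
    if "reg d j \<noteq> 1 \<or> x1 = y1" for x0 x1 x2 y1
  proof (cases "x1 = y1")
    case False
    then have "reg d j \<noteq> 1" using that by auto
    show ?thesis
    proof (rule crun_local[OF d])
      show "(1::nat) < 3" by simp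
      show "int T < Dp d 1 j" by (rule reg_far[OF j]) (use \<open>reg d j \<noteq> 1\<close> T in auto)
      fix v :: nat assume "v \<noteq> 3*d + 1"
      then show "net_input d x0 x1 x2 v = net_input d x0 y1 x2 v"
        by (simp add: net_input_def)
    qed
  qed simp
  have s2: "crun d init msg upd (net_input d x0 x1 x2) r T j = crun d init msg upd (net_input d x0 x1 y2) r T j"
    if "reg d j \<noteq> 2 \<or> x2 = y2" for x0 x1 x2 y2
  proof (cases "x2 = y2")
    case False
    then have "reg d j \<noteq> 2" using that by auto
    show ?thesis
    proof (rule crun_local[OF d])
      show "(2::nat) < 3" by simp
      show "int T < Dp d 2 j" by (rule reg_far[OF j]) (use \<open>reg d j \<noteq> 2\<close> T in auto)
      fix v :: nat assume "v \<noteq> 3*d + 2"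
      then show "net_input d x0 x1 x2 v = net_input d x0 x1 y2 v"
        by (simp add: net_input_def)
    qed
  qed simp
  show ?thesis using s0[OF c0] s1[OF c1] s2[OF c2] by simp
qed

lemma count_even:
  fixes mE mB mC mD mO :: bits
  assumes ev: "even d" and d: "0 < d"
    and R0: "\<And>q. q < 3*d \<Longrightarrow> reg d q = 0 \<Longrightarrow> mE q = mD q \<and> mB q = mC q \<and> mC q = mO q"
    and R1: "\<And>q. q < 3*d \<Longrightarrow> reg d q = 1 \<Longrightarrow> mE q = mC q \<and> mB q = mD q \<and> mD q = mO q"
    and R2: "\<And>q. q < 3*d \<Longrightarrow> reg d q = 2 \<Longrightarrow> mE q = mB q \<and> mC q = mD q \<and> mD q = mO q"
  shows "even (card {q\<in>{..<3*d}. mE q \<and> aE d q} + card {q\<in>{..<3*d}. mB q \<and> aB d q} +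
     card {q\<in>{..<3*d}. mC q \<and> aC d q} + card {q\<in>{..<3*d}. mD q \<and> aD d q} + card {q\<in>{..<3*d}. mO q \<and> aO d q})"
proof -
  define w where "w q = (if mE q \<and> aE d q then 1 else 0) + (if mB q \<and> aB d q then 1 else 0) +
     (if mC q \<and> aC d q then 1 else 0) + (if mD q \<and> aD d q then 1 else 0) + (if mO q \<and> aO d q then (1::nat) else 0)" for q
  have sum: "card {q\<in>{..<3*d}. mE q \<and> aE d q} + card {q\<in>{..<3*d}. mB q \<and> aB d q} +
     card {q\<in>{..<3*d}. mC q \<and> aC d q} + card {q\<in>{..<3*d}. mD q \<and> aD d q} + card {q\<in>{..<3*d}. mO q \<and> aO d q}
     = (\<Sum>q<3*d. w q)"
    unfolding w_def card_sum[OF finite_lessThan] by (simp add: sum.distrib)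
  have "even (w q)" if q: "q < 3*d" for q
  proof (cases "even q")
    case True
    then have a: "aE d q" "aB d q" "aC d q" "aD d q" "\<not> aO d q" using q by (auto simp: aE_def aB_def aC_def aD_def aO_def)
    have "reg d q = 0 \<or> reg d q = 1 \<or> reg d q = 2" by (auto simp: reg_def)
    then show ?thesis using R0[OF q] R1[OF q] R2[OF q] a unfolding w_def by auto
  next
    case False
    have qd: "q \<noteq> d" "q \<noteq> 2*d" using False ev by auto
    have a: "\<not> aE d q" "aO d q" "aB d q = (q < d)" "aC d q = (2*d < q)" "aD d q = (d < q \<and> q < 2*d)"
      using q False by (auto simp: aE_def aB_def aC_def aD_def aO_def intro: odd_pos)
    have "reg d q = 0 \<or> reg d q = 1 \<or> reg d q = 2" by (auto simp: reg_def)
    moreover have ?thesis if r: "reg d q = 0"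
    proof -
      have "2*q < d \<or> 5*d \<le> 2*q" using r by (auto simp: reg_def split: if_splits)
      then have "\<not> aD d q" using a by auto
      moreover have "aB d q \<or> aC d q" using a qd \<open>2*q < d \<or> 5*d \<le> 2*q\<close> d by auto
      moreover have "\<not> (aB d q \<and> aC d q)" using a by auto
      ultimately show ?thesis using R0[OF q r] a(1,2) unfolding w_def by auto
    qed
    moreover have ?thesis if r: "reg d q = 1"
    proof -
      have "d \<le> 2*q \<and> 2*q < 3*d" using r by (auto simp: reg_def split: if_splits)
      then have "\<not> aC d q" using a by auto
      moreover have "aB d q \<or> aD d q" using a qd \<open>d \<le> 2*q \<and> 2*q < 3*d\<close> by auto
      moreover have "\<not> (aB d q \<and> aD d q)" using a by auto
      ultimately show ?thesis using R1[OF q r] a(1,2) unfolding w_def by auto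
    qed
    moreover have ?thesis if r: "reg d q = 2"
    proof -
      have "3*d \<le> 2*q \<and> 2*q < 5*d" using r by (auto simp: reg_def split: if_splits)
      then have "\<not> aB d q" using a by auto
      moreover have "aC d q \<or> aD d q" using a qd \<open>3*d \<le> 2*q \<and> 2*q < 5*d\<close> by auto
      moreover have "\<not> (aC d q \<and> aD d q)" using a by auto
      ultimately show ?thesis using R2[OF q r] a(1,2) unfolding w_def by auto
    qed
    ultimately show ?thesis by blast
  qed
  then have "even (\<Sum>q<3*d. w q)" by (intro dvd_sum) auto
  then show ?thesis unfolding sum .
qed



lemma no_all_success:
  assumes ev: "even d" and d: "0 < d" and T: "2*T \<le> d"
    and sE: "coutput d T init msg upd out (net_input d False False False) r \<in> Lambda d False False False"
    and sB: "coutput d T init msg upd out (net_input d True True False) r \<in> Lambda d True True False"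
    and sC: "coutput d T init msg upd out (net_input d True False True) r \<in> Lambda d True False True"
    and sD: "coutput d T init msg upd out (net_input d False True True) r \<in> Lambda d False True True"
    and sO: "coutput d T init msg upd out (net_input d True True True) r \<in> Lambda d True True True"
  shows False
proof -
  define M where "M b0 b1 b2 = coutput d T init msg upd out (net_input d b0 b1 b2) r" for b0 b1 b2
  have Meq: "M b0 b1 b2 q = M b0' b1' b2' q"
    if "q < 3*d" "reg d q \<noteq> 0 \<or> b0 = b0'" "reg d q \<noteq> 1 \<or> b1 = b1'" "reg d q \<noteq> 2 \<or> b2 = b2'"
    for q b0 b1 b2 b0' b1' b2'
    unfolding M_def coutput_def using crun_reg[OF d that(1) T that(2-4), of init msg upd r] by simp
  have "even (card {q\<in>{..<3*d}. M False False False q \<and> aE d q} + card {q\<in>{..<3*d}. M True True False q \<and> aB d q} +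
     card {q\<in>{..<3*d}. M True False True q \<and> aC d q} + card {q\<in>{..<3*d}. M False True True q \<and> aD d q} +
     card {q\<in>{..<3*d}. M True True True q \<and> aO d q})"
  proof (rule count_even[OF ev d])
    fix q assume "q < 3*d" "reg d q = 0"
    then show "M False False False q = M False True True q \<and> M True True False q = M True False True q \<and> M True False True q = M True True True q"
      by (intro conjI Meq) auto
  next
    fix q assume "q < 3*d" "reg d q = 1"
    then show "M False False False q = M True False True q \<and> M True True False q = M False True True q \<and> M False True True q = M True True True q"
      by (intro conjI Meq) auto
  next
    fix q assume "q < 3*d" "reg d q = 2"
    then show "M False False False q = M True True False q \<and> M True False True q = M False True True q \<and> M False True True q = M True True True q"
      by (intro conjI Meq) auto
  qed
  moreover have "even (card {q\<in>{..<3*d}. M False False False q \<and> aE d q})"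
    using parE[OF ev d sE[folded M_def]] by simp
  moreover have "odd (card {q\<in>{..<3*d}. M True True False q \<and> aB d q})"
    using parB[OF ev d sB[folded M_def]] by simp
  moreover have "odd (card {q\<in>{..<3*d}. M True False True q \<and> aC d q})"
    using parC[OF ev d sC[folded M_def]] by simp
  moreover have "odd (card {q\<in>{..<3*d}. M False True True q \<and> aD d q})"
    using parD[OF ev d sD[folded M_def]] by simp
  moreover have "even (card {q\<in>{..<3*d}. M True True True q \<and> aO d q})"
    using parO[OF ev d sO[folded M_def]] by simp
  ultimately show False by simp
qed

lemma classical:
  assumes ev: "even d" and d: "0 < d" and T: "2*T \<le> d" and P: "prob_space R"
    and S: "\<forall>b0 b1 b2. csuccess_event d T R init msg upd out b0 b1 b2 \<in> sets R"
  shows "\<exists>b0 b1 b2. measure R (csuccess_event d T R init msg upd out b0 b1 b2) \<le> 7 / 8"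
proof (rule ccontr)
  assume H: "\<not> ?thesis"
  interpret prob_space R by (rule P)
  define bs :: "nat \<Rightarrow> bool \<times> bool \<times> bool" where
    "bs = (\<lambda>k. if k = 0 then (False, False, False) else if k = 1 then (True, True, False)
       else if k = 2 then (True, False, True) else if k = 3 then (False, True, True) else (True, True, True))"
  define E where "E k = (case bs k of (b0, b1, b2) \<Rightarrow> csuccess_event d T R init msg upd out b0 b1 b2)" for k
  have Es: "E k \<in> sets R" for k using S by (auto simp: E_def split: prod.splits)
  have Ep: "measure R (E k) > 7/8" for k
  proof -
    obtain b0 b1 b2 where bk: "bs k = (b0, b1, b2)" by (cases "bs k") auto
    have "\<not> measure R (csuccess_event d T R init msg upd out b0 b1 b2) \<le> 7 / 8" using H by blast
    then show ?thesis by (simp add: E_def bk not_le)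
  qed
  have cover: "space R \<subseteq> (\<Union>k\<in>{..<5}. space R - E k)"
  proof
    fix r assume r: "r \<in> space R"
    show "r \<in> (\<Union>k\<in>{..<5}. space R - E k)"
    proof (rule ccontr)
      assume "r \<notin> (\<Union>k\<in>{..<5}. space R - E k)"
      then have "r \<in> E k" if "k < 5" for k using r that by blast
      then have e0: "r \<in> E 0" and e1: "r \<in> E 1" and e2: "r \<in> E 2" and e3: "r \<in> E 3" and e4: "r \<in> E 4" by auto
      have "E 0 = csuccess_event d T R init msg upd out False False False" by (simp add: E_def bs_def)
      moreover have "E 1 = csuccess_event d T R init msg upd out True True False" by (simp add: E_def bs_def)
      moreover have "E 2 = csuccess_event d T R init msg upd out True False True" by (simp add: E_def bs_def)
      moreover have "E 3 = csuccess_event d T R init msg upd out False True True" by (simp add: E_def bs_def)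
      moreover have "E 4 = csuccess_event d T R init msg upd out True True True" by (simp add: E_def bs_def)
      ultimately show False using e0 e1 e2 e3 e4 no_all_success[OF ev d T, of init msg upd out r]
        unfolding csuccess_event_def by blast
    qed
  qed
  have "1 = measure R (space R)" using prob_space by simp
  also have "\<dots> \<le> measure R (\<Union>k\<in>{..<5}. space R - E k)"
    by (rule finite_measure_mono[OF cover]) (intro sets.finite_UN sets.Diff sets.top Es finite_lessThan)
  also have "\<dots> \<le> (\<Sum>k\<in>{..<5}. measure R (space R - E k))"
    by (rule finite_measure_subadditive_finite) (use Es in auto)
  also have "\<dots> = (\<Sum>k\<in>{..<5}. 1 - measure R (E k))"
    using Es by (simp add: prob_compl)
  also have "\<dots> < (\<Sum>k\<in>{..<5::nat}. 1/8::real)"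
    by (rule sum_strict_mono) (use Ep in \<open>auto simp: lessThan_empty_iff\<close>)
  finally show False by simp
qed



definition Hm :: "nat set \<Rightarrow> nat \<Rightarrow> qop" where
  "Hm S k = (\<lambda>a b. if (\<forall>q\<in>S-{k}. a q = b q) then hgate k a b else 0)"

definition Pm :: "(bits \<Rightarrow> bits) \<Rightarrow> qop" where
  "Pm f = (\<lambda>a b. if b = f a then 1 else 0)"

lemma apply_on_Hm:
  assumes "finite S" "k \<in> S"
  shows "apply_on S (Hm S k) \<psi> = apply_H k \<psi>"
proof
  fix x
  have "apply_on S (Hm S k) \<psi> x = (\<Sum>y\<in>nbh S x. Hm S k (restr x S) (restr y S) * \<psi> y)"
    by (simp add: apply_on_nbh)
  also have "\<dots> = (\<Sum>y\<in>nbh {k} x. Hm S k (restr x S) (restr y S) * \<psi> y)"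
  proof (rule sum.mono_neutral_right)
    show "finite (nbh S x)" using assms(1) by (rule finite_nbh)
    show "nbh {k} x \<subseteq> nbh S x" using assms(2) by (auto simp: nbh_def)
    show "\<forall>y\<in>nbh S x - nbh {k} x. Hm S k (restr x S) (restr y S) * \<psi> y = 0"
    proof
      fix y assume y: "y \<in> nbh S x - nbh {k} x"
      then obtain q where "q \<noteq> k" "y q \<noteq> x q" by (auto simp: nbh_def)
      moreover have "q \<in> S" using y \<open>y q \<noteq> x q\<close> by (auto simp: nbh_def)
      ultimately show "Hm S k (restr x S) (restr y S) * \<psi> y = 0"
        by (auto simp: Hm_def restr_def)
    qed
  qed
  also have "\<dots> = (\<Sum>y\<in>nbh {k} x. hgate k (restr x {k}) (restr y {k}) * \<psi> y)"
    by (intro sum.cong refl) (auto simp: Hm_def hgate_def restr_def nbh_def assms(2))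
  also have "\<dots> = apply_H k \<psi> x" by (simp add: apply_H_def apply_on_nbh)
  finally show "apply_on S (Hm S k) \<psi> x = apply_H k \<psi> x" .
qed

lemma apply_on_Pm:
  assumes "finite S" "\<And>a. a \<in> conf S \<Longrightarrow> f a \<in> conf S"
  shows "apply_on S (Pm f) \<psi> x = \<psi> (ov x (f (restr x S)) S)"
proof -
  have "apply_on S (Pm f) \<psi> x = (\<Sum>y\<in>nbh S x. if y = ov x (f (restr x S)) S then \<psi> y else 0)"
    unfolding apply_on_nbh Pm_def
  proof (intro sum.cong refl)
    fix y assume y: "y \<in> nbh S x"
    have "(restr y S = f (restr x S)) = (y = ov x (f (restr x S)) S)"
      using nbh_ov[OF y] restr_ov[OF assms(2)[OF restr_conf]] by metis
    then show "(if restr y S = f (restr x S) then 1 else 0) * \<psi> y = (if y = ov x (f (restr x S)) S then \<psi> y else 0)"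
      by simp
  qed
  also have "\<dots> = \<psi> (ov x (f (restr x S)) S)"
    using finite_nbh[OF assms(1)] ov_nbh by (simp add: sum.delta')
  finally show ?thesis .
qed

lemma ov_upd:
  assumes "k \<in> S"
  shows "ov x ((restr x S)(k := v)) S = x(k := v)"
  using assms by (auto simp: ov_def restr_def fun_eq_iff)

lemma conf_upd: "a \<in> conf S \<Longrightarrow> k \<in> S \<Longrightarrow> a(k := v) \<in> conf S"
  by (auto simp: conf_def)

lemma restr_in: "q \<in> S \<Longrightarrow> restr x S q = x q"
  by (simp add: restr_def)

lemma unitary_dg:
  assumes "finite S" "\<And>a. a \<in> conf S \<Longrightarrow> cnj (p a) * p a = 1"
  shows "unitary_on S (dg p)"
  unfolding unitary_on_def
proof (intro conjI ballI)
  fix a b assume a: "a \<in> conf S" and b: "b \<in> conf S"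
  have "(\<Sum>c\<in>conf S. cnj (dg p c a) * dg p c b) = (\<Sum>c\<in>conf S. if c = a then (if a = b then cnj (p a) * p a else 0) else 0)"
    by (intro sum.cong refl) (auto simp: dg_def)
  also have "\<dots> = (if a = b then 1 else 0)"
    using a assms(2)[OF a] finite_conf[OF assms(1)] by auto
  finally show "(\<Sum>c\<in>conf S. cnj (dg p c a) * dg p c b) = (if a = b then 1 else 0)" .
qed (rule assms(1))

lemma unitary_Pm:
  assumes "finite S" "\<And>a. a \<in> conf S \<Longrightarrow> f a \<in> conf S" "\<And>a. a \<in> conf S \<Longrightarrow> f (f a) = a"
  shows "unitary_on S (Pm f)"
  unfolding unitary_on_def
proof (intro conjI ballI)
  fix a b assume a: "a \<in> conf S" and b: "b \<in> conf S"
  have "(\<Sum>c\<in>conf S. cnj (Pm f c a) * Pm f c b) = (\<Sum>c\<in>conf S. if c = f a then (if b = f c then 1 else 0) else 0)"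
  proof (intro sum.cong refl)
    fix c assume c: "c \<in> conf S"
    have "(a = f c) = (c = f a)" using assms(3)[OF a] assms(3)[OF c] by metis
    then show "cnj (Pm f c a) * Pm f c b = (if c = f a then (if b = f c then 1 else 0) else 0)"
      by (auto simp: Pm_def)
  qed
  also have "\<dots> = (if a = b then 1 else 0)"
    using a assms finite_conf[OF assms(1)] by auto
  finally show "(\<Sum>c\<in>conf S. cnj (Pm f c a) * Pm f c b) = (if a = b then 1 else 0)" .
qed (rule assms(1))

lemma cnj_hgate: "cnj (hgate k a b) = hgate k a b"
  by (simp add: hgate_def)

lemma unitary_Hm:
  assumes S: "finite S" and k: "k \<in> S"
  shows "unitary_on S (Hm S k)"
  unfolding unitary_on_def
proof (intro conjI ballI)
  fix a b assume a: "a \<in> conf S" and b: "b \<in> conf S"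
  let ?g = "\<lambda>c. cnj (Hm S k c a) * Hm S k c b"
  have ne: "a(k:=False) \<noteq> a(k:=True)" by (metis fun_upd_same)
  have "(\<Sum>c\<in>conf S. ?g c) = (\<Sum>c\<in>{a(k:=False), a(k:=True)}. ?g c)"
  proof (rule sum.mono_neutral_right)
    show "finite (conf S)" by (rule finite_conf[OF S])
    show "{a(k:=False), a(k:=True)} \<subseteq> conf S" using a k by (auto intro: conf_upd)
    show "\<forall>c\<in>conf S - {a(k:=False), a(k:=True)}. ?g c = 0"
    proof
      fix c assume c: "c \<in> conf S - {a(k:=False), a(k:=True)}"
      have "\<exists>q\<in>S-{k}. c q \<noteq> a q"
      proof (rule ccontr)
        assume "\<not> ?thesis"
        then have "c = a(k := c k)" using c a by (auto simp: conf_def fun_eq_iff)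
        then show False using c by (cases "c k") auto
      qed
      then show "?g c = 0" by (auto simp: Hm_def)
    qed
  qed
  also have "\<dots> = ?g (a(k:=False)) + ?g (a(k:=True))" using ne by simp
  also have "\<dots> = (if a = b then 1 else 0)"
  proof (cases "\<forall>q\<in>S-{k}. a q = b q")
    case True
    have "(a = b) = (a k = b k)"
    proof
      assume "a k = b k" then show "a = b" using True a b by (auto simp: conf_def fun_eq_iff)
    qed simp
    have s2: "(complex_of_real (sqrt 2))^2 = 2" by (simp flip: of_real_power)
    then show ?thesis using True \<open>(a = b) = (a k = b k)\<close>
      by (auto simp: Hm_def hgate_def field_simps power2_eq_square[symmetric])
  next
    case False
    then have "a \<noteq> b" by auto
    then show ?thesis using False by (auto simp: Hm_def)
  qed
  finally show "(\<Sum>c\<in>conf S. cnj (Hm S k c a) * Hm S k c b) = (if a = b then 1 else 0)" .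
qed (rule S)

lemma unitary_mm:
  assumes S: "finite S" and U1: "unitary_on S M1" and U2: "unitary_on S M2"
  shows "unitary_on S (mm S M1 M2)"
  unfolding unitary_on_def
proof (intro conjI ballI)
  fix a b assume a: "a \<in> conf S" and b: "b \<in> conf S"
  have o1: "(\<Sum>c\<in>conf S. cnj (M1 c e) * M1 c f) = (if e = f then 1 else 0)" if "e \<in> conf S" "f \<in> conf S" for e f
    using U1 that by (simp add: unitary_on_def)
  have "(\<Sum>c\<in>conf S. cnj (mm S M1 M2 c a) * mm S M1 M2 c b) =
     (\<Sum>c\<in>conf S. \<Sum>e\<in>conf S. \<Sum>f\<in>conf S. cnj (M2 e a) * M2 f b * (cnj (M1 c e) * M1 c f))"
  proof (rule sum.cong[OF refl])
    fix c
    have "cnj (mm S M1 M2 c a) * mm S M1 M2 c b =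
       (\<Sum>e\<in>conf S. cnj (M1 c e) * cnj (M2 e a)) * (\<Sum>f\<in>conf S. M1 c f * M2 f b)"
      by (simp add: mm_def cnj_sum)
    also have "\<dots> = (\<Sum>e\<in>conf S. \<Sum>f\<in>conf S. (cnj (M1 c e) * cnj (M2 e a)) * (M1 c f * M2 f b))"
      by (rule sum_product)
    also have "\<dots> = (\<Sum>e\<in>conf S. \<Sum>f\<in>conf S. cnj (M2 e a) * M2 f b * (cnj (M1 c e) * M1 c f))"
      by (intro sum.cong refl) (simp only: ac_simps)
    finally show "cnj (mm S M1 M2 c a) * mm S M1 M2 c b =
       (\<Sum>e\<in>conf S. \<Sum>f\<in>conf S. cnj (M2 e a) * M2 f b * (cnj (M1 c e) * M1 c f))" .
  qed
  also have "\<dots> = (\<Sum>e\<in>conf S. \<Sum>c\<in>conf S. \<Sum>f\<in>conf S. cnj (M2 e a) * M2 f b * (cnj (M1 c e) * M1 c f))"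
    by (rule sum.swap)
  also have "\<dots> = (\<Sum>e\<in>conf S. \<Sum>f\<in>conf S. \<Sum>c\<in>conf S. cnj (M2 e a) * M2 f b * (cnj (M1 c e) * M1 c f))"
    by (rule sum.cong[OF refl], rule sum.swap)
  also have "\<dots> = (\<Sum>e\<in>conf S. \<Sum>f\<in>conf S. cnj (M2 e a) * M2 f b * (\<Sum>c\<in>conf S. cnj (M1 c e) * M1 c f))"
    by (simp only: sum_distrib_left)
  also have "\<dots> = (\<Sum>e\<in>conf S. \<Sum>f\<in>conf S. if f = e then cnj (M2 e a) * M2 e b else 0)"
    by (intro sum.cong refl) (simp add: o1)
  also have "\<dots> = (\<Sum>e\<in>conf S. cnj (M2 e a) * M2 e b)"
    using finite_conf[OF S] by simp
  also have "\<dots> = (if a = b then 1 else 0)" using U2 a b by (simp add: unitary_on_def)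
  finally show "(\<Sum>c\<in>conf S. cnj (mm S M1 M2 c a) * mm S M1 M2 c b) = (if a = b then 1 else 0)" .
qed (rule S)



definition hm :: "nat \<Rightarrow> nat \<Rightarrow> nat" where
  "hm d q = (if q < 3*d then q else if q < 6*d then q - 3*d else 3*d + (q - 6*d))"

definition mvf :: "nat \<Rightarrow> nat \<Rightarrow> nat \<Rightarrow> nat" where
  "mvf d t q = (if t = 0 then (if q < 3*d then q else if q < 6*d then prv (3*d) (q - 3*d) else d * (q - 6*d))
                else (if q < 3*d then q else if q < 6*d then q - 3*d else d * (q - 6*d)))"

abbreviation NN :: "nat \<Rightarrow> nat" where "NN d \<equiv> 6*d + 3"

abbreviation Hl :: "nat \<Rightarrow> nat \<Rightarrow> nat \<Rightarrow> nat set" where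
  "Hl d t v \<equiv> held (NN d) (hm d) (mvf d) t v"

definition cnot :: "nat \<Rightarrow> nat \<Rightarrow> bits \<Rightarrow> bits" where
  "cnot c t a = a(t := (a t \<noteq> a c))"

definition flipf :: "nat \<Rightarrow> bits \<Rightarrow> bits" where
  "flipf k a = a(k := \<not> a k)"

definition idm :: qop where "idm = dg (\<lambda>_. 1)"

definition ph1 :: "nat \<Rightarrow> nat \<Rightarrow> bits \<Rightarrow> complex" where
  "ph1 d v a = sg (a v \<and> a (3*d + nxt (3*d) v)) * ph (v = 0 \<and> a (6*d) \<and> a v) *
      ph (v = d \<and> a (6*d+1) \<and> a v) * ph (v = 2*d \<and> a (6*d+2) \<and> a v)"

definition Ualg :: "nat \<Rightarrow> nat \<Rightarrow> nat \<Rightarrow> bool \<Rightarrow> qop" where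
  "Ualg d t v b =
    (if t = 0 then
       (if v < 3*d then mm (Hl d 0 v) (Pm (cnot v (3*d+v))) (Hm (Hl d 0 v) v)
        else if v < 3*d+3 \<and> b then Pm (flipf (6*d + (v - 3*d))) else idm)
     else if t = 1 then (if v < 3*d then dg (ph1 d v) else idm)
     else (if v < 3*d then mm (Hl d 2 v) (Hm (Hl d 2 v) v) (Hm (Hl d 2 v) (3*d+v)) else idm))"

definition outf :: "nat \<Rightarrow> nat \<Rightarrow> bits \<Rightarrow> bool" where
  "outf d j a = (a j \<noteq> a (3*d + j))"

lemma qloc_simps:
  "qloc (hm d) (mvf d) 0 q = hm d q"
  "qloc (hm d) (mvf d) (Suc t) q = mvf d t q"
  by (simp_all add: qloc_def)

lemma held_iff: "q \<in> held N home mv t v \<longleftrightarrow> q < N \<and> qloc home mv t q = v"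
  by (simp add: held_def)

lemma finite_held: "finite (held N home mv t v)"
  by (rule finite_subset[of _ "{..<N}"]) (auto simp: held_def)

lemma mem0: assumes "v < 3*d" shows "v \<in> Hl d 0 v" "3*d + v \<in> Hl d 0 v"
  using assms by (auto simp: held_iff qloc_simps hm_def)

lemma mem0w: assumes "i < 3" shows "6*d + i \<in> Hl d 0 (3*d + i)"
  using assms by (auto simp: held_iff qloc_simps hm_def)

lemma mem1: assumes "v < 3*d" shows "v \<in> Hl d 1 v" "3*d + nxt (3*d) v \<in> Hl d 1 v"
proof -
  show "v \<in> Hl d 1 v" using assms by (simp add: held_iff qloc_def mvf_def)
  have "nxt (3*d) v < 3*d" using assms by simp
  then have "nxt (3*d) v < 3*d + 3" by simp
  moreover have "prv (3*d) (nxt (3*d) v) = v" using assms by (auto simp: prv_def nxt_eq)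
  ultimately show "3*d + nxt (3*d) v \<in> Hl d 1 v" using assms by (simp add: held_iff qloc_def mvf_def)
qed

lemma mem1w: assumes "i < 3" shows "6*d + i \<in> Hl d 1 (d*i)"
  using assms by (auto simp: held_iff qloc_def mvf_def)

lemma mem2: assumes "v < 3*d" shows "v \<in> Hl d 2 v" "3*d + v \<in> Hl d 2 v"
  using assms by (auto simp: held_iff qloc_def mvf_def)

lemma cnot_conf: "c \<in> S \<Longrightarrow> t \<in> S \<Longrightarrow> a \<in> conf S \<Longrightarrow> cnot c t a \<in> conf S"
  by (auto simp: cnot_def conf_def)

lemma cnot_inv: "c \<noteq> t \<Longrightarrow> cnot c t (cnot c t a) = a"
  by (auto simp: cnot_def fun_eq_iff)

lemma flipf_conf: "k \<in> S \<Longrightarrow> a \<in> conf S \<Longrightarrow> flipf k a \<in> conf S"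
  by (auto simp: flipf_def conf_def)

lemma flipf_inv: "flipf k (flipf k a) = a"
  by (auto simp: flipf_def fun_eq_iff)

lemma unitary_idm: "finite S \<Longrightarrow> unitary_on S idm"
  unfolding idm_def by (rule unitary_dg) auto

lemma cnj_sg: "cnj (sg b) * sg b = 1" by (simp add: sg_def)
lemma cnj_ph: "cnj (ph b) * ph b = 1" by (simp add: ph_def)

lemma cnj_mult4: "cnj (a * b * c * e) * (a * b * c * e) = (cnj a * a) * (cnj b * b) * (cnj c * c) * (cnj e * e)"
  by (simp add: mult_ac)

lemma unitary_ph1: "finite S \<Longrightarrow> unitary_on S (dg (ph1 d v))"
  by (rule unitary_dg) (simp_all only: ph1_def cnj_mult4 cnj_sg cnj_ph mult_1)

lemma valid:
  assumes d: "0 < d"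
  shows "qlocal_valid d 2 (NN d) (hm d) (mvf d) (Ualg d)"
  unfolding qlocal_valid_def
proof (intro conjI allI impI ballI)
  fix q assume "q < NN d"
  then show "hm d q \<in> net_nodes d" by (auto simp: hm_def net_nodes_def)
next
  fix t q :: nat assume t: "t < 2" and q: "q < NN d"
  show "mvf d t q = qloc (hm d) (mvf d) t q \<or> net_adj d (qloc (hm d) (mvf d) t q) (mvf d t q)"
  proof (cases "t = 0")
    case True
    show ?thesis
    proof (cases "3*d \<le> q \<and> q < 6*d")
      case True
      define j where "j = q - 3*d"
      have j: "j < 3*d" using True unfolding j_def by linarith
      have "net_adj d j (prv (3*d) j)"
        unfolding net_adj_def using j d by (auto simp: prv_def)
      then show ?thesis using True \<open>t = 0\<close> by (simp add: qloc_def mvf_def hm_def j_def)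
    next
      case False
      then have "q < 3*d \<or> 6*d \<le> q" by auto
      then show ?thesis
      proof
        assume "q < 3*d" then show ?thesis using \<open>t = 0\<close> by (simp add: qloc_def mvf_def hm_def)
      next
        assume "6*d \<le> q"
        then have "q - 6*d < 3" using q by simp
        then have "net_adj d (3*d + (q - 6*d)) (d * (q - 6*d))" unfolding net_adj_def by blast
        then show ?thesis using \<open>t = 0\<close> \<open>6*d \<le> q\<close> d by (simp add: qloc_def mvf_def hm_def)
      qed
    qed
  next
    case False
    then have t1: "t = 1" using t by simp
    show ?thesis
    proof (cases "3*d \<le> q \<and> q < 6*d")
      case True
      define j where "j = q - 3*d"
      have j: "j < 3*d" using True unfolding j_def by linarith
      have "net_adj d (prv (3*d) j) j"
        unfolding net_adj_def using j d by (auto simp: prv_def)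
      then show ?thesis using True t1 by (simp add: qloc_def mvf_def j_def)
    next
      case False
      then show ?thesis using t1 by (auto simp: qloc_def mvf_def)
    qed
  qed
next
  fix t v :: nat and b assume t: "t \<le> 2" and v: "v \<in> net_nodes d"
  show "unitary_on (Hl d t v) (Ualg d t v b)"
  proof -
    have t3: "t = 0 \<or> t = 1 \<or> t = 2" using t by auto
    have fin: "finite (Hl d t' v)" for t' :: nat by (rule finite_held)
    show ?thesis
    proof (cases "v < 3*d")
      case True
      have u0: "unitary_on (Hl d 0 v) (Ualg d 0 v b)"
        using True mem0[OF True] fin
        by (auto simp: Ualg_def intro!: unitary_mm unitary_Hm unitary_Pm cnot_conf cnot_inv)
      have u1: "unitary_on (Hl d 1 v) (Ualg d 1 v b)"
        using True fin by (simp add: Ualg_def unitary_ph1)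
      have u2: "unitary_on (Hl d 2 v) (Ualg d 2 v b)"
        using True mem2[OF True] fin
        by (auto simp: Ualg_def intro!: unitary_mm unitary_Hm)
      show ?thesis using t3 u0 u1 u2 by auto
    next
      case False
      have u0: "unitary_on (Hl d 0 v) (Ualg d 0 v b)"
      proof (cases "v < 3*d + 3 \<and> b")
        case True
        then have "v - 3*d < 3" by auto
        then have k: "6*d + (v - 3*d) \<in> Hl d 0 v" using mem0w[of "v - 3*d" d] False by simp
        show ?thesis using True False fin k
          by (auto simp: Ualg_def intro!: unitary_Pm flipf_conf flipf_inv)
      next
        case F2: False
        then show ?thesis using False fin by (auto simp: Ualg_def unitary_idm)
      qed
      show ?thesis using t3 u0 False fin by (auto simp: Ualg_def unitary_idm)
    qed
  qed
qed



lemma apply_idm: "finite S \<Longrightarrow> apply_on S idm \<psi> = \<psi>"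
  by (auto simp: idm_def apply_on_dg fun_eq_iff)

lemma A0:
  assumes v: "v < 3*d"
  shows "apply_on (Hl d 0 v) (Ualg d 0 v b) \<psi> = (\<lambda>x. apply_H v \<psi> (x(3*d+v := (x (3*d+v) \<noteq> x v))))"
proof
  fix x
  let ?S = "Hl d 0 v"
  have fin: "finite ?S" by (rule finite_held)
  have m: "v \<in> ?S" "3*d+v \<in> ?S" using mem0[OF v] by auto
  have "apply_on ?S (Ualg d 0 v b) \<psi> x = apply_on ?S (Pm (cnot v (3*d+v))) (apply_H v \<psi>) x"
    using v fin m by (simp add: Ualg_def apply_on_mm apply_on_Hm)
  also have "\<dots> = apply_H v \<psi> (ov x (cnot v (3*d+v) (restr x ?S)) ?S)"
    by (rule apply_on_Pm[OF fin]) (use m in \<open>auto intro: cnot_conf\<close>)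
  also have "cnot v (3*d+v) (restr x ?S) = (restr x ?S)(3*d+v := (x (3*d+v) \<noteq> x v))"
    using m by (simp add: cnot_def restr_in)
  also have "ov x \<dots> ?S = x(3*d+v := (x (3*d+v) \<noteq> x v))" using m by (simp add: ov_upd)
  finally show "apply_on ?S (Ualg d 0 v b) \<psi> x = apply_H v \<psi> (x(3*d+v := (x (3*d+v) \<noteq> x v)))" .
qed

lemma A0w:
  assumes i: "i < 3"
  shows "apply_on (Hl d 0 (3*d+i)) (Ualg d 0 (3*d+i) b) \<psi> =
     (if b then (\<lambda>x. \<psi> (x(6*d+i := \<not> x (6*d+i)))) else \<psi>)"
proof (cases b)
  case True
  show ?thesis
  proof
    fix x
    let ?S = "Hl d 0 (3*d+i)"
    have fin: "finite ?S" by (rule finite_held)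
    have m: "6*d+i \<in> ?S" using mem0w[OF i] by auto
    have "apply_on ?S (Ualg d 0 (3*d+i) b) \<psi> x = apply_on ?S (Pm (flipf (6*d+i))) \<psi> x"
      using i True by (simp add: Ualg_def)
    also have "\<dots> = \<psi> (ov x (flipf (6*d+i) (restr x ?S)) ?S)"
      by (rule apply_on_Pm[OF fin]) (use m in \<open>auto intro: flipf_conf\<close>)
    also have "flipf (6*d+i) (restr x ?S) = (restr x ?S)(6*d+i := \<not> x (6*d+i))"
      using m by (simp add: flipf_def restr_in)
    also have "ov x \<dots> ?S = x(6*d+i := \<not> x (6*d+i))" using m by (simp add: ov_upd)
    finally have "apply_on ?S (Ualg d 0 (3*d+i) b) \<psi> x = \<psi> (x(6*d+i := \<not> x (6*d+i)))" .
    then show "apply_on ?S (Ualg d 0 (3*d+i) b) \<psi> x = (if b then (\<lambda>x. \<psi> (x(6*d+i := \<not> x (6*d+i)))) else \<psi>) x"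
      using True by (simp only: if_True)
  qed
next
  case False
  then show ?thesis using i by (simp add: Ualg_def apply_idm finite_held)
qed

lemma ph1_restr:
  assumes v: "v < 3*d"
  shows "ph1 d v (restr x (Hl d 1 v)) = ph1 d v x"
proof -
  have m: "v \<in> Hl d 1 v" "3*d + nxt (3*d) v \<in> Hl d 1 v" using mem1[OF v] by auto
  have w0: "v = 0 \<Longrightarrow> 6*d \<in> Hl d 1 v" using mem1w[of 0 d] by simp
  have w1: "v = d \<Longrightarrow> 6*d+1 \<in> Hl d 1 v" using mem1w[of 1 d] by simp
  have w2: "v = 2*d \<Longrightarrow> 6*d+2 \<in> Hl d 1 v" using mem1w[of 2 d] by (simp add: mult.commute)
  show ?thesis unfolding ph1_def using m w0 w1 w2
    by (cases "v = 0"; cases "v = d"; cases "v = 2*d") (simp_all add: restr_in)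
qed

lemma A1:
  assumes v: "v < 3*d"
  shows "apply_on (Hl d 1 v) (Ualg d 1 v b) \<psi> x = ph1 d v x * \<psi> x"
proof -
  have "Ualg d 1 v b = dg (ph1 d v)" using v by (simp add: Ualg_def)
  moreover have "apply_on (Hl d 1 v) (dg (ph1 d v)) \<psi> x = ph1 d v (restr x (Hl d 1 v)) * \<psi> x"
    by (rule apply_on_dg[OF finite_held])
  ultimately show ?thesis unfolding ph1_restr[OF v] by simp
qed

lemma A1w: "\<not> v < 3*d \<Longrightarrow> apply_on (Hl d 1 v) (Ualg d 1 v b) \<psi> = \<psi>"
  by (simp add: Ualg_def apply_idm finite_held)

lemma A2:
  assumes v: "v < 3*d"
  shows "apply_on (Hl d 2 v) (Ualg d 2 v b) \<psi> = apply_H v (apply_H (3*d+v) \<psi>)"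
  using v mem2[OF v] by (simp add: Ualg_def apply_on_mm apply_on_Hm finite_held)

lemma A2w: "\<not> v < 3*d \<Longrightarrow> apply_on (Hl d 2 v) (Ualg d 2 v b) \<psi> = \<psi>"
  by (simp add: Ualg_def apply_idm finite_held)



definition C0 :: "nat \<Rightarrow> nat \<Rightarrow> bits \<Rightarrow> bool" where
  "C0 d k x \<longleftrightarrow> (\<forall>q. x q \<longrightarrow> q < k \<or> (3*d \<le> q \<and> q < 3*d + k)) \<and> (\<forall>j<k. x (3*d+j) = x j)"

definition st0 :: "nat \<Rightarrow> nat \<Rightarrow> qstate" where
  "st0 d k x = hc ^ k * (if C0 d k x then 1 else 0)"

lemma st0_0: "st0 d 0 = ket0"
  by (auto simp: st0_def C0_def ket0_def fun_eq_iff)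

lemma C0_step:
  assumes k: "k < 3*d"
  shows "C0 d k ((x(3*d+k := (x (3*d+k) \<noteq> x k)))(k := False)) \<longleftrightarrow> C0 d (Suc k) x"
proof
  let ?y = "(x(3*d+k := (x (3*d+k) \<noteq> x k)))(k := False)"
  assume H: "C0 d k ?y"
  have A: "x q \<Longrightarrow> q < Suc k \<or> (3*d \<le> q \<and> q < 3*d + Suc k)" for q
  proof -
    assume xq: "x q"
    show ?thesis
    proof (cases "q = k \<or> q = 3*d+k")
      case True then show ?thesis using k by auto
    next
      case False
      then have "?y q" using xq by auto
      then show ?thesis using H by (auto simp: C0_def)
    qed
  qed
  have B: "x (3*d+j) = x j" if j: "j < Suc k" for j
  proof (cases "j = k")
    case True
    have "\<not> ?y (3*d+k)"
    proof
      assume "?y (3*d+k)"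
      moreover have "?y (3*d+k) \<longrightarrow> 3*d+k < k \<or> (3*d \<le> 3*d+k \<and> 3*d+k < 3*d + k)"
        using H unfolding C0_def by blast
      ultimately show False by simp
    qed
    then show ?thesis using True k by auto
  next
    case False
    then have "j < k" using j by auto
    then have "?y (3*d+j) = ?y j" using H by (auto simp: C0_def)
    then show ?thesis using \<open>j < k\<close> k by auto
  qed
  show "C0 d (Suc k) x" using A B by (auto simp: C0_def)
next
  let ?y = "(x(3*d+k := (x (3*d+k) \<noteq> x k)))(k := False)"
  assume H: "C0 d (Suc k) x"
  have A: "?y q \<Longrightarrow> q < k \<or> (3*d \<le> q \<and> q < 3*d + k)" for q
  proof -
    assume yq: "?y q"
    have "q \<noteq> k" using yq by auto
    moreover have "q \<noteq> 3*d+k" using yq H k by (auto simp: C0_def)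
    moreover have "x q" using yq \<open>q \<noteq> k\<close> \<open>q \<noteq> 3*d+k\<close> by auto
    ultimately show ?thesis using H by (auto simp: C0_def)
  qed
  have B: "?y (3*d+j) = ?y j" if j: "j < k" for j
    using H j k by (auto simp: C0_def)
  show "C0 d k ?y" using A B by (auto simp: C0_def)
qed

lemma st0_step:
  assumes k: "k < 3*d"
  shows "(\<lambda>x. apply_H k (st0 d k) (x(3*d+k := (x (3*d+k) \<noteq> x k)))) = st0 d (Suc k)"
proof
  fix x
  let ?y = "x(3*d+k := (x (3*d+k) \<noteq> x k))"
  have "\<not> C0 d k (?y(k := True))"
  proof
    assume "C0 d k (?y(k := True))"
    then have "(?y(k := True)) k \<longrightarrow> k < k \<or> (3*d \<le> k \<and> k < 3*d + k)" unfolding C0_def by blast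
    then show False using k by simp
  qed
  then have z: "st0 d k (?y(k := True)) = 0" by (simp add: st0_def)
  show "apply_H k (st0 d k) ?y = st0 d (Suc k) x"
    unfolding apply_H_eq z using C0_step[OF k, of x] by (simp add: st0_def)
qed

lemma fold0:
  "k \<le> 3*d \<Longrightarrow> fold (\<lambda>v. apply_on (Hl d 0 v) (Ualg d 0 v (inp v))) [0..<k] ket0 = st0 d k"
proof (induction k)
  case 0 then show ?case by (simp add: st0_0)
next
  case (Suc k)
  then have k: "k < 3*d" by simp
  have "fold (\<lambda>v. apply_on (Hl d 0 v) (Ualg d 0 v (inp v))) [0..<Suc k] ket0 =
     apply_on (Hl d 0 k) (Ualg d 0 k (inp k)) (st0 d k)"
    using Suc by simp
  also have "\<dots> = st0 d (Suc k)" unfolding A0[OF k] st0_step[OF k] ..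
  finally show ?case .
qed

definition Wc :: "nat \<Rightarrow> bool \<Rightarrow> bool \<Rightarrow> bool \<Rightarrow> bits \<Rightarrow> bool" where
  "Wc d b0 b1 b2 x \<longleftrightarrow> (\<forall>q. 6*d \<le> q \<longrightarrow> x q = (q = 6*d \<and> b0 \<or> q = 6*d+1 \<and> b1 \<or> q = 6*d+2 \<and> b2))"

definition cp :: "nat \<Rightarrow> bits \<Rightarrow> bool" where
  "cp d x \<longleftrightarrow> (\<forall>j<3*d. x (3*d+j) = x j)"

definition P0 :: "nat \<Rightarrow> bool \<Rightarrow> bool \<Rightarrow> bool \<Rightarrow> qstate" where
  "P0 d b0 b1 b2 x = hc ^ (3*d) * (if Wc d b0 b1 b2 x \<and> cp d x then 1 else 0)"

lemma C0_flip:
  "C0 d (3*d) (\<lambda>q. x q \<noteq> (q = 6*d \<and> b0 \<or> q = 6*d+1 \<and> b1 \<or> q = 6*d+2 \<and> b2)) \<longleftrightarrow> Wc d b0 b1 b2 x \<and> cp d x"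
proof -
  have e: "(\<forall>q. (x q \<noteq> (q = 6*d \<and> b0 \<or> q = 6*d+1 \<and> b1 \<or> q = 6*d+2 \<and> b2)) \<longrightarrow> q < 3*d \<or> (3*d \<le> q \<and> q < 3*d + 3*d))
     \<longleftrightarrow> Wc d b0 b1 b2 x"
  proof -
    define F where "F q = (q = 6*d \<and> b0 \<or> q = 6*d+1 \<and> b1 \<or> q = 6*d+2 \<and> b2)" for q
    have r: "(q < 3*d \<or> (3*d \<le> q \<and> q < 3*d + 3*d)) \<longleftrightarrow> q < 6*d" for q by auto
    have "(\<forall>q. (x q \<noteq> F q) \<longrightarrow> q < 6*d) \<longleftrightarrow> (\<forall>q. 6*d \<le> q \<longrightarrow> x q = F q)"
    proof
      assume H: "\<forall>q. x q \<noteq> F q \<longrightarrow> q < 6*d"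
      show "\<forall>q. 6*d \<le> q \<longrightarrow> x q = F q"
      proof (intro allI impI)
        fix q assume "6*d \<le> q"
        then show "x q = F q" using H[rule_format, of q] by linarith
      qed
    next
      assume H: "\<forall>q. 6*d \<le> q \<longrightarrow> x q = F q"
      show "\<forall>q. x q \<noteq> F q \<longrightarrow> q < 6*d"
      proof (intro allI impI)
        fix q assume "x q \<noteq> F q"
        then show "q < 6*d" using H[rule_format, of q] by linarith
      qed
    qed
    then show ?thesis unfolding Wc_def r F_def .
  qed
  show ?thesis unfolding C0_def e cp_def by auto
qed

definition fl :: "bool \<Rightarrow> nat \<Rightarrow> bits \<Rightarrow> bits" where
  "fl b k x = (if b then x(k := \<not> x k) else x)"

lemma fl3: "fl b0 (6*d) (fl b1 (6*d+1) (fl b2 (6*d+2) x)) =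
   (\<lambda>q. x q \<noteq> (q = 6*d \<and> b0 \<or> q = 6*d+1 \<and> b1 \<or> q = 6*d+2 \<and> b2))"
  by (auto simp: fl_def fun_eq_iff)

lemma step0:
  "fold (\<lambda>v. apply_on (Hl d 0 v) (Ualg d 0 v (net_input d b0 b1 b2 v))) [0..<3*d+3] ket0 = P0 d b0 b1 b2"
proof -
  let ?F = "\<lambda>v. apply_on (Hl d 0 v) (Ualg d 0 v (net_input d b0 b1 b2 v))"
  have l: "[0..<3*d+3] = [0..<3*d] @ [3*d, 3*d+1, 3*d+2]" by (simp add: upt_add_eq_append[of 0 "3*d" 3] numeral_3_eq_3)
  have w0: "?F (3*d) \<psi> = (\<lambda>x. \<psi> (fl b0 (6*d) x))" for \<psi>
  proof -
    have "net_input d b0 b1 b2 (3*d) = b0" by (simp add: net_input_def)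
    then have "?F (3*d) \<psi> = (if b0 then (\<lambda>x. \<psi> (x(6*d := \<not> x (6*d)))) else \<psi>)"
      using A0w[of 0 d b0 \<psi>] by simp
    then show ?thesis by (cases b0) (simp_all add: fl_def)
  qed
  have w1: "?F (3*d+1) \<psi> = (\<lambda>x. \<psi> (fl b1 (6*d+1) x))" for \<psi>
  proof -
    have "net_input d b0 b1 b2 (3*d+1) = b1" by (simp add: net_input_def)
    then have "?F (3*d+1) \<psi> = (if b1 then (\<lambda>x. \<psi> (x(6*d+1 := \<not> x (6*d+1)))) else \<psi>)"
      using A0w[of 1 d b1 \<psi>] by simp
    then show ?thesis by (cases b1) (simp_all add: fl_def)
  qed
  have w2: "?F (3*d+2) \<psi> = (\<lambda>x. \<psi> (fl b2 (6*d+2) x))" for \<psi>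
  proof -
    have "net_input d b0 b1 b2 (3*d+2) = b2" by (simp add: net_input_def)
    then have "?F (3*d+2) \<psi> = (if b2 then (\<lambda>x. \<psi> (x(6*d+2 := \<not> x (6*d+2)))) else \<psi>)"
      using A0w[of 2 d b2 \<psi>] by simp
    then show ?thesis by (cases b2) (simp_all add: fl_def)
  qed
  have "fold ?F [0..<3*d+3] ket0 = ?F (3*d+2) (?F (3*d+1) (?F (3*d) (st0 d (3*d))))"
    unfolding l using fold0[of "3*d" d "net_input d b0 b1 b2"] by simp
  also have "\<dots> = (\<lambda>x. st0 d (3*d) (fl b0 (6*d) (fl b1 (6*d+1) (fl b2 (6*d+2) x))))"
    unfolding w0 w1 w2 ..
  also have "\<dots> = (\<lambda>x. st0 d (3*d) (\<lambda>q. x q \<noteq> (q = 6*d \<and> b0 \<or> q = 6*d+1 \<and> b1 \<or> q = 6*d+2 \<and> b2)))"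
    by (simp only: fl3)
  also have "\<dots> = P0 d b0 b1 b2"
    unfolding C0_flip st0_def P0_def by (simp only: C0_flip)
  finally show ?thesis .
qed



lemma fold_mult:
  "(\<And>v \<psi>. v \<in> set L \<Longrightarrow> F v \<psi> = (\<lambda>x. p v x * \<psi> x)) \<Longrightarrow>
    fold F L \<psi> x = prod_list (map (\<lambda>v. p v x) L) * (\<psi> x :: complex)"
proof (induction L arbitrary: \<psi>)
  case Nil then show ?case by simp
next
  case (Cons a L)
  have "fold F (a # L) \<psi> x = fold F L (F a \<psi>) x" by simp
  also have "\<dots> = prod_list (map (\<lambda>v. p v x) L) * F a \<psi> x"
    using Cons by simp
  also have "F a \<psi> x = p a x * \<psi> x" using Cons.prems[of a \<psi>] by simp
  finally have "fold F (a # L) \<psi> x = prod_list (map (\<lambda>v. p v x) L) * (p a x * \<psi> x)" .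
  then show ?case by (simp add: mult.left_commute)
qed

lemma ph_delta: "ph (v = c \<and> P) = (if v = c then ph P else 1)"
  by (simp add: ph_def)

lemma ph1_prod:
  assumes d: "0 < d" and W: "Wc d b0 b1 b2 x" and C: "cp d x"
  shows "(\<Prod>v<3*d. ph1 d v x) = Phi d b0 b1 b2 x"
proof -
  have x0: "x (6*d) = b0" and x1: "x (6*d+1) = b1" and x2: "x (6*d+2) = b2"
    using W by (auto simp: Wc_def)
  have e: "ph1 d v x = sg (x v \<and> x (nxt (3*d) v)) * (if v = 0 then ph (b0 \<and> x 0) else 1) *
      (if v = d then ph (b1 \<and> x d) else 1) * (if v = 2*d then ph (b2 \<and> x (2*d)) else 1)" if v: "v < 3*d" for v
  proof -
    have "x (3*d + nxt (3*d) v) = x (nxt (3*d) v)" using C v by (simp add: cp_def)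
    then show ?thesis unfolding ph1_def x0 x1 x2 ph_delta by (simp add: conj_commute)
  qed
  have "(\<Prod>v<3*d. ph1 d v x) = (\<Prod>v<3*d. sg (x v \<and> x (nxt (3*d) v)) * (if v = 0 then ph (b0 \<and> x 0) else 1) *
      (if v = d then ph (b1 \<and> x d) else 1) * (if v = 2*d then ph (b2 \<and> x (2*d)) else 1))"
    by (rule prod.cong) (simp_all add: e)
  also have "\<dots> = Phi d b0 b1 b2 x"
    unfolding prod.distrib using d by (simp add: Phi_def)
  finally show ?thesis .
qed

lemma step1:
  assumes d: "0 < d"
  shows "fold (\<lambda>v. apply_on (Hl d 1 v) (Ualg d 1 v (inp v))) [0..<3*d+3] (P0 d b0 b1 b2) x =
     Phi d b0 b1 b2 x * P0 d b0 b1 b2 x"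
proof -
  let ?p = "\<lambda>v x. if v < 3*d then ph1 d v x else 1"
  have "fold (\<lambda>v. apply_on (Hl d 1 v) (Ualg d 1 v (inp v))) [0..<3*d+3] (P0 d b0 b1 b2) x =
     prod_list (map (\<lambda>v. ?p v x) [0..<3*d+3]) * P0 d b0 b1 b2 x"
  proof (rule fold_mult)
    fix v \<psi>
    show "apply_on (Hl d 1 v) (Ualg d 1 v (inp v)) \<psi> = (\<lambda>x. ?p v x * \<psi> x)"
    proof (cases "v < 3*d")
      case True
      show ?thesis
      proof
        fix x show "apply_on (Hl d 1 v) (Ualg d 1 v (inp v)) \<psi> x = ?p v x * \<psi> x"
          unfolding A1[OF True] using True by (simp only: if_True)
      qed
    next
      case False
      then show ?thesis unfolding A1w[OF False] by simp
    qed
  qed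
  also have "prod_list (map (\<lambda>v. ?p v x) [0..<3*d+3]) = (\<Prod>v<3*d. ph1 d v x)"
  proof -
    have "prod_list (map (\<lambda>v. ?p v x) [0..<3*d+3]) = (\<Prod>v\<in>{..<3*d+3}. ?p v x)"
      by (simp add: prodl_set atLeast0LessThan)
    also have "\<dots> = (\<Prod>v\<in>{..<3*d}. ?p v x)"
      by (rule prod.mono_neutral_right) auto
    finally show ?thesis by simp
  qed
  finally have eq: "fold (\<lambda>v. apply_on (Hl d 1 v) (Ualg d 1 v (inp v))) [0..<3*d+3] (P0 d b0 b1 b2) x =
     (\<Prod>v<3*d. ph1 d v x) * P0 d b0 b1 b2 x" .
  show ?thesis
  proof (cases "Wc d b0 b1 b2 x \<and> cp d x")
    case True then show ?thesis using eq ph1_prod[OF d] by simp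
  next
    case False
    then have "P0 d b0 b1 b2 x = 0" by (auto simp: P0_def)
    then show ?thesis using eq by simp
  qed
qed

lemma fold2:
  assumes d: "0 < d"
  shows "k \<le> 3*d \<Longrightarrow> fold (\<lambda>v. apply_on (Hl d 2 v) (Ualg d 2 v (inp v))) [0..<k] \<psi> = HT ({..<k} \<union> {3*d..<3*d+k}) \<psi>"
proof (induction k)
  case 0 then show ?case by (simp add: HT_empty)
next
  case (Suc k)
  then have k: "k < 3*d" by simp
  have "fold (\<lambda>v. apply_on (Hl d 2 v) (Ualg d 2 v (inp v))) [0..<Suc k] \<psi> =
     apply_H k (apply_H (3*d+k) (HT ({..<k} \<union> {3*d..<3*d+k}) \<psi>))"
    using Suc by (simp add: A2[OF k])
  also have "\<dots> = HT (insert k (insert (3*d+k) ({..<k} \<union> {3*d..<3*d+k}))) \<psi>"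
    using k by (simp add: HT_insert)
  also have "insert k (insert (3*d+k) ({..<k} \<union> {3*d..<3*d+k})) = {..<Suc k} \<union> {3*d..<3*d+Suc k}"
    by auto
  finally show ?case .
qed

lemma step2:
  assumes d: "0 < d"
  shows "fold (\<lambda>v. apply_on (Hl d 2 v) (Ualg d 2 v (inp v))) [0..<3*d+3] \<psi> = HT {..<6*d} \<psi>"
proof -
  have l: "[0..<3*d+3] = [0..<3*d] @ [3*d, 3*d+1, 3*d+2]" by (simp add: upt_add_eq_append[of 0 "3*d" 3] numeral_3_eq_3)
  have "{..<3*d} \<union> {3*d..<3*d+3*d} = {..<6*d}" by auto
  then show ?thesis unfolding l using fold2[OF d, of "3*d" inp \<psi>] by (simp add: A2w)
qed

lemma qrun2: "qrun d N home mv U inp 2 = qstep d N home mv U inp 2 (qstep d N home mv U inp 1 (qstep d N home mv U inp 0 ket0))"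
  by (simp add: numeral_2_eq_2)



lemma final_state:
  assumes d: "0 < d"
  shows "qrun d (NN d) (hm d) (mvf d) (Ualg d) (net_input d b0 b1 b2) 2 =
     HT {..<6*d} (\<lambda>x. Phi d b0 b1 b2 x * P0 d b0 b1 b2 x)"
proof -
  have s0: "qstep d (NN d) (hm d) (mvf d) (Ualg d) (net_input d b0 b1 b2) 0 ket0 = P0 d b0 b1 b2"
    unfolding qstep_def by (rule step0)
  have s1: "qstep d (NN d) (hm d) (mvf d) (Ualg d) (net_input d b0 b1 b2) 1 (P0 d b0 b1 b2) =
      (\<lambda>x. Phi d b0 b1 b2 x * P0 d b0 b1 b2 x)"
    unfolding qstep_def by (rule ext) (rule step1[OF d])
  show ?thesis unfolding qrun2 s0 s1 unfolding qstep_def by (rule step2[OF d])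
qed

lemma Phi_cong:
  assumes d: "0 < d" and e: "\<And>j. j < 3*d \<Longrightarrow> y j = z j"
  shows "Phi d b0 b1 b2 y = Phi d b0 b1 b2 z"
proof -
  have "(\<Prod>j<3*d. sg (y j \<and> y (nxt (3*d) j))) = (\<Prod>j<3*d. sg (z j \<and> z (nxt (3*d) j)))"
    by (rule prod.cong) (use e d in auto)
  moreover have "y 0 = z 0" "y d = z d" "y (2*d) = z (2*d)" using e d by auto
  ultimately show ?thesis by (simp add: Phi_def)
qed

lemma prod_split: "(\<Prod>q<a+b. f q) = (\<Prod>q<a. f q) * (\<Prod>q<b. f (a+q) :: complex)" for a b :: nat
  by (induction b) (simp_all add: mult_ac)

definition dbl :: "nat \<Rightarrow> bits \<Rightarrow> bits" where
  "dbl d w = (\<lambda>q. (q < 3*d \<and> w q) \<or> (3*d \<le> q \<and> q < 6*d \<and> w (q - 3*d)))"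

lemma dbl_restr:
  assumes z: "z \<in> {z\<in>conf {..<6*d}. cp d z}"
  shows "dbl d (restr z {..<3*d}) = z"
  proof
  fix q
  show "dbl d (restr z {..<3*d}) q = z q"
  proof (cases "q < 3*d")
    case True then show ?thesis by (simp add: dbl_def restr_def)
  next
    case False
    show ?thesis
    proof (cases "q < 6*d")
      case True
      then have "z q = z (q - 3*d)" using z False by (auto simp: cp_def dest: spec[of _ "q - 3*d"])
      moreover have "q - 3*d < 3*d" using True by linarith
      ultimately show ?thesis using True False by (simp add: dbl_def restr_def)
    next
      case F2: False
      then show ?thesis using z False by (auto simp: dbl_def conf_def)
    qed
  qed
qed

lemma sum_cp:
  "(\<Sum>z\<in>conf {..<6*d}. if cp d z then g z else 0) = (\<Sum>w\<in>conf {..<3*d}. g (dbl d w))"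
proof -
  have "(\<Sum>z\<in>conf {..<6*d}. if cp d z then g z else 0) = (\<Sum>z\<in>{z\<in>conf {..<6*d}. cp d z}. g z)"
    by (rule sum.inter_filter[symmetric]) (simp add: finite_conf)
  also have "\<dots> = (\<Sum>w\<in>conf {..<3*d}. g (dbl d w))"
  proof (rule sum.reindex_bij_witness[where i="dbl d" and j="\<lambda>z. restr z {..<3*d}"])
    fix z assume z: "z \<in> {z\<in>conf {..<6*d}. cp d z}"
    show "restr z {..<3*d} \<in> conf {..<3*d}" by simp
    show "dbl d (restr z {..<3*d}) = z" using z by (simp add: dbl_restr)
  next
    fix w assume w: "w \<in> conf {..<3*d}"
    show "restr (dbl d w) {..<3*d} = w" using w by (auto simp: dbl_def restr_def conf_def fun_eq_iff)
    show "dbl d w \<in> {z\<in>conf {..<6*d}. cp d z}" using w by (auto simp: dbl_def conf_def cp_def)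
  qed (simp_all add: dbl_restr)
  finally show ?thesis .
qed

definition mo :: "nat \<Rightarrow> bits \<Rightarrow> bits" where
  "mo d x = (\<lambda>j. j < 3*d \<and> (x j \<noteq> x (3*d + j)))"

lemma HT_final:
  assumes d: "0 < d"
  shows "HT {..<6*d} (\<lambda>x. Phi d b0 b1 b2 x * P0 d b0 b1 b2 x) x =
    hc ^ (6*d) * hc ^ (3*d) * (if Wc d b0 b1 b2 x then 1 else 0) *
    (\<Sum>w\<in>conf {..<3*d}. Gs d b0 b1 b2 (mo d x) w)"
proof -
  let ?Q = "{..<6*d}"
  have card: "card ?Q = 6*d" by simp
  have e1: "(\<Prod>q\<in>?Q. sg (x q \<and> z q)) * (Phi d b0 b1 b2 (ov x z ?Q) * P0 d b0 b1 b2 (ov x z ?Q)) =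
      hc ^ (3*d) * (if Wc d b0 b1 b2 x then 1 else 0) * (if cp d z then (\<Prod>q\<in>?Q. sg (x q \<and> z q)) * Phi d b0 b1 b2 z else 0)"
    if z: "z \<in> conf ?Q" for z
  proof -
    have "Wc d b0 b1 b2 (ov x z ?Q) = Wc d b0 b1 b2 x" by (auto simp: Wc_def ov_def)
    moreover have "cp d (ov x z ?Q) = cp d z" by (auto simp: cp_def ov_def)
    moreover have "Phi d b0 b1 b2 (ov x z ?Q) = Phi d b0 b1 b2 z" by (rule Phi_cong[OF d]) (simp add: ov_def)
    ultimately show ?thesis by (simp add: P0_def)
  qed
  have "HT ?Q (\<lambda>x. Phi d b0 b1 b2 x * P0 d b0 b1 b2 x) x =
     hc ^ (6*d) * (\<Sum>z\<in>conf ?Q. hc ^ (3*d) * (if Wc d b0 b1 b2 x then 1 else 0) * (if cp d z then (\<Prod>q\<in>?Q. sg (x q \<and> z q)) * Phi d b0 b1 b2 z else 0))"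
    unfolding HT_def card by (simp add: e1 cong: sum.cong)
  also have "\<dots> = hc ^ (6*d) * hc ^ (3*d) * (if Wc d b0 b1 b2 x then 1 else 0) *
     (\<Sum>z\<in>conf ?Q. if cp d z then (\<Prod>q\<in>?Q. sg (x q \<and> z q)) * Phi d b0 b1 b2 z else 0)"
    by (simp add: sum_distrib_left mult_ac)
  also have "(\<Sum>z\<in>conf ?Q. if cp d z then (\<Prod>q\<in>?Q. sg (x q \<and> z q)) * Phi d b0 b1 b2 z else 0) =
     (\<Sum>w\<in>conf {..<3*d}. (\<Prod>q\<in>?Q. sg (x q \<and> dbl d w q)) * Phi d b0 b1 b2 (dbl d w))"
    by (rule sum_cp)
  also have "\<dots> = (\<Sum>w\<in>conf {..<3*d}. Gs d b0 b1 b2 (mo d x) w)"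
  proof (rule sum.cong[OF refl])
    fix w assume w: "w \<in> conf {..<3*d}"
    have "Phi d b0 b1 b2 (dbl d w) = Phi d b0 b1 b2 w" by (rule Phi_cong[OF d]) (simp add: dbl_def)
    moreover have "(\<Prod>q\<in>?Q. sg (x q \<and> dbl d w q)) = (\<Prod>q<3*d. sg (mo d x q \<and> w q))"
    proof -
      have "(\<Prod>q\<in>?Q. sg (x q \<and> dbl d w q)) = (\<Prod>q<3*d+3*d. sg (x q \<and> dbl d w q))" by simp
      also have "\<dots> = (\<Prod>q<3*d. sg (x q \<and> dbl d w q)) * (\<Prod>q<3*d. sg (x (3*d+q) \<and> dbl d w (3*d+q)))"
        by (rule prod_split)
      also have "\<dots> = (\<Prod>q<3*d. sg (x q \<and> w q) * sg (x (3*d+q) \<and> w q))"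
        by (simp add: dbl_def prod.distrib)
      also have "\<dots> = (\<Prod>q<3*d. sg (mo d x q \<and> w q))"
        by (rule prod.cong) (auto simp: mo_def sg_def)
      finally show ?thesis .
    qed
    ultimately show "(\<Prod>q\<in>?Q. sg (x q \<and> dbl d w q)) * Phi d b0 b1 b2 (dbl d w) = Gs d b0 b1 b2 (mo d x) w"
      by (simp add: Gs_def)
  qed
  finally show ?thesis .
qed

lemma hc_nz: "hc \<noteq> 0" by (simp add: hc_def)

lemma quantum:
  assumes d: "0 < d"
  shows "quantum_always_valid d 2"
  unfolding quantum_always_valid_def
proof (intro exI conjI allI impI)
  show "qlocal_valid d 2 (NN d) (hm d) (mvf d) (Ualg d)" by (rule valid[OF d])
  fix b0 b1 b2 x
  assume nz: "qrun d (NN d) (hm d) (mvf d) (Ualg d) (net_input d b0 b1 b2) 2 x \<noteq> 0"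
  have "(\<Sum>w\<in>conf {..<3*d}. Gs d b0 b1 b2 (mo d x) w) \<noteq> 0"
    using nz unfolding final_state[OF d] HT_final[OF d] by auto
  moreover have mc: "mo d x \<in> conf {..<3*d}" by (auto simp: mo_def conf_def)
  ultimately have "process_state d b0 b1 b2 (mo d x) \<noteq> 0"
    by (simp add: process_state_eq hc_nz)
  then have "mo d x \<in> Lambda d b0 b1 b2" using mc by (simp add: Lambda_def)
  moreover have "qoutput d (NN d) (hm d) (mvf d) 2 (outf d) x = mo d x"
    by (auto simp: qoutput_def mo_def outf_def restr_in mem2 fun_eq_iff)
  ultimately show "qoutput d (NN d) (hm d) (mvf d) 2 (outf d) x \<in> Lambda d b0 b1 b2" by simp
qed



theorem theorem4:
  fixes d :: nat
  assumes "even d" and "d \<ge> 2"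
  shows "quantum_always_valid d 2 \<and>
    (\<forall>(T::nat) (R::'r measure) (init::nat \<Rightarrow> bool \<Rightarrow> 'r \<Rightarrow> 's)
        (msg::nat \<Rightarrow> nat \<Rightarrow> nat \<Rightarrow> 's \<Rightarrow> 'm) upd out.
       2 * T \<le> d \<and> prob_space R \<and>
       (\<forall>b0 b1 b2. csuccess_event d T R init msg upd out b0 b1 b2 \<in> sets R) \<longrightarrow>
       (\<exists>b0 b1 b2. measure R (csuccess_event d T R init msg upd out b0 b1 b2) \<le> 7 / 8))"
proof -
  have d: "0 < d" using assms(2) by simp
  show ?thesis
  proof (intro conjI allI impI)
    show "quantum_always_valid d 2" by (rule quantum[OF d])
  next
    fix T :: nat and R :: "'r measure" and init :: "nat \<Rightarrow> bool \<Rightarrow> 'r \<Rightarrow> 's"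
      and msg :: "nat \<Rightarrow> nat \<Rightarrow> nat \<Rightarrow> 's \<Rightarrow> 'm" and upd out
    assume H: "2 * T \<le> d \<and> prob_space R \<and>
       (\<forall>b0 b1 b2. csuccess_event d T R init msg upd out b0 b1 b2 \<in> sets R)"
    show "\<exists>b0 b1 b2. measure R (csuccess_event d T R init msg upd out b0 b1 b2) \<le> 7 / 8"
      using H classical[OF assms(1) d] by blast
  qed
qed

end
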